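(* Let $G$ be a finite group, let $H,K\leq G$, and let $p,q$ be primes. Then, for the prime ideals $\mathfrak{p}_{L,r}$ of the Burnside $G$-Tambara functor $\underline{A}_G$: (i) $\mathfrak{p}_{K,0}\subseteq\mathfrak{p}_{H,0}$ if and only if $H\preccurlyeq_G K$; (ii) $\mathfrak{p}_{H,0}\subsetneq\mathfrak{p}_{H,p}$ and $\mathfrak{p}_{H,p}\not\subseteq\mathfrak{p}_{K,0}$; (iii) $\mathfrak{p}_{K,p}\subseteq\mathfrak{p}_{H,q}$ if and only if $p=q$ and $O^p(H)\preccurlyeq_G O^p(K)$; (iv) $\mathfrak{p}_{K,0}\subseteq\mathfrak{p}_{H,p}$ if and only if $O^p(H)\preccurlyeq_G K$.
   Context: $A(H)$ is the Burnside ring of a finite group $H$; for $I\le H$, $\varphi^I_H\colon A(H)\to\mathbb{Z}$ is the ring map $X\mapsto|X^I|$, and for $r$ a prime or $0$, $\varphi^I_{H,r}$ is its composite with $\mathbb{Z}\to\mathbb{Z}/r\mathbb{Z}$. The Burnside $G$-Tambara functor $\underline{A}_G$ has $\underline{A}_G(G/H)=A(H)$ with restriction of action, transfer $K\times_H-$, norm $\mathrm{Map}_H(K,-)$ and conjugations. For $L\le G$ and $r$ a prime or $0$, $\mathfrak{p}_{L,r}$ is the (prime) Tambara ideal with $\mathfrak{p}_{L,r}(G/H)=\bigcap_{I\le H,\ I\preccurlyeq_G L}\ker(\varphi^I_{H,r})$, where $I\preccurlyeq_G L$ means $I$ is conjugate in $G$ to a subgroup of $L$. For $H\le G$ and $p$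 prime, $O^p(H)$ is the intersection of all normal subgroups $I\trianglelefteq H$ with $|H:I|$ a power of $p$. *)

theory Defs
  imports "HOL-Algebra.Algebra"
begin

definition subconj :: "('a, 'b) monoid_scheme \<Rightarrow> 'a set \<Rightarrow> 'a set \<Rightarrow> bool" where
  "subconj G I L \<longleftrightarrow> (\<exists>g\<in>carrier G. (g <#\<^bsub>G\<^esub> I) #>\<^bsub>G\<^esub> inv\<^bsub>G\<^esub> g \<subseteq> L)"

definition subgroups_of :: "('a, 'b) monoid_scheme \<Rightarrow> 'a set \<Rightarrow> 'a set set" where
  "subgroups_of G H = {J. subgroup J G \<and> J \<subseteq> H}"

definition coset_space :: "('a, 'b) monoid_scheme \<Rightarrow> 'a set \<Rightarrow> 'a set \<Rightarrow> 'a set set" where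
  "coset_space G H J = (\<lambda>h. h <#\<^bsub>G\<^esub> J) ` H"

definition fixed_cosets :: "('a, 'b) monoid_scheme \<Rightarrow> 'a set \<Rightarrow> 'a set \<Rightarrow> 'a set \<Rightarrow> nat" where
  "fixed_cosets G H J I = card {C \<in> coset_space G H J. \<forall>i\<in>I. i <#\<^bsub>G\<^esub> C = C}"

text \<open>Elements of the Burnside ring A(H) are represented by integer coefficient functions c
  on subgroups of H, standing for the virtual H-set  \<Sum>_J c J [H/J]  (every element of A(H)
  arises this way).\<close>
definition mark :: "('a, 'b) monoid_scheme \<Rightarrow> 'a set \<Rightarrow> 'a set \<Rightarrow> ('a set \<Rightarrow> int) \<Rightarrow> int" where
  "mark G H I c = (\<Sum>J\<in>subgroups_of G H. c J * int (fixed_cosets G H J I))"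

text \<open>The level G/H of the prime Tambara ideal p_{L,r} (r a prime or 0), as the set of
  representatives of its elements: the kernel of \<phi>^I_{H,r} is "r divides the mark".\<close>
definition pideal :: "('a, 'b) monoid_scheme \<Rightarrow> 'a set \<Rightarrow> nat \<Rightarrow> 'a set \<Rightarrow> ('a set \<Rightarrow> int) set" where
  "pideal G L r H = {c. \<forall>I\<in>subgroups_of G H. subconj G I L \<longrightarrow> int r dvd mark G H I c}"

definition tideal_le :: "('a, 'b) monoid_scheme \<Rightarrow> 'a set \<Rightarrow> nat \<Rightarrow> 'a set \<Rightarrow> nat \<Rightarrow> bool" where
  "tideal_le G L r L' r' \<longleftrightarrow> (\<forall>H. subgroup H G \<longrightarrow> pideal G L r H \<subseteq> pideal G L' r' H)"

definition tideal_less :: "('a, 'b) monoid_scheme \<Rightarrow> 'a set \<Rightarrow> nat \<Rightarrow> 'a set \<Rightarrow> nat \<Rightarrow> bool" where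
  "tideal_less G L r L' r' \<longleftrightarrow> tideal_le G L r L' r' \<and>
     (\<exists>H. subgroup H G \<and> pideal G L r H \<noteq> pideal G L' r' H)"

definition Op :: "('a, 'b) monoid_scheme \<Rightarrow> nat \<Rightarrow> 'a set \<Rightarrow> 'a set" where
  "Op G p H = \<Inter>{I. I \<subseteq> H \<and> I \<lhd> (G\<lparr>carrier := H\<rparr>) \<and> (\<exists>k. card H = p ^ k * card I)}"

end

theory Submission
  imports Defs
begin

context group begin

lemma lcancel_iff [simp]: "x \<in> carrier G \<Longrightarrow> y \<in> carrier G \<Longrightarrow> z \<in> carrier G \<Longrightarrow> (x \<otimes> y = x \<otimes> z) = (y = z)"
  by (metis inv_closed l_inv l_one m_assoc)

lemma inv_cancel_left [simp]: "x \<in> carrier G \<Longrightarrow> y \<in> carrier G \<Longrightarrow> inv x \<otimes> (x \<otimes> y) = y"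
  by (simp add: m_assoc[symmetric])

lemma inv_cancel_left2 [simp]: "x \<in> carrier G \<Longrightarrow> y \<in> carrier G \<Longrightarrow> x \<otimes> (inv x \<otimes> y) = y"
  by (simp add: m_assoc[symmetric])
lemma lcos_elem: "x \<in> h <# S \<longleftrightarrow> (\<exists>s\<in>S. x = h \<otimes> s)"
  by (auto simp: l_coset_def)
lemma lcos_subgroup_self:
  assumes "subgroup S G" "h \<in> S" shows "h <# S = S"
proof
  show "h <# S \<subseteq> S"
  proof
    fix x assume "x \<in> h <# S"
    then obtain s where "s \<in> S" "x = h \<otimes> s" unfolding lcos_elem by blast
    then show "x \<in> S" using assms by (simp add: subgroup.m_closed)
  qed
  show "S \<subseteq> h <# S"
  proof
    fix s assume s: "s \<in> S"
    have hc: "h \<in> carrier G" "s \<in> carrier G" using assms s by (simp_all add: subgroup.mem_carrier)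
    have "s = h \<otimes> (inv h \<otimes> s)" using hc by (simp add: m_assoc[symmetric])
    moreover have "inv h \<otimes> s \<in> S" using assms s by (simp add: subgroup.m_closed subgroup.m_inv_closed)
    ultimately show "s \<in> h <# S" unfolding lcos_elem by blast
  qed
qed

lemma conj_elem: "x \<in> (g <# S) #> h \<longleftrightarrow> (\<exists>s\<in>S. x = g \<otimes> s \<otimes> h)"
  by (auto simp: l_coset_def r_coset_def)

lemma conj_elemI: "s \<in> S \<Longrightarrow> g \<otimes> s \<otimes> h \<in> (g <# S) #> h"
  unfolding conj_elem by auto

lemma conj_elemE: "x \<in> (g <# S) #> h \<Longrightarrow> (\<And>s. s \<in> S \<Longrightarrow> x = g \<otimes> s \<otimes> h \<Longrightarrow> P) \<Longrightarrow> P"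
  unfolding conj_elem by auto

lemma conj_image: "(g <# S) #> h = (\<lambda>s. g \<otimes> s \<otimes> h) ` S"
  by (auto simp: conj_elem)

lemma lcos_image: "h <# S = (\<lambda>s. h \<otimes> s) ` S"
  by (auto simp: lcos_elem)

lemma lcos_eq_iff:
  assumes S: "subgroup S G" and h: "h \<in> carrier G" and h': "h' \<in> carrier G"
  shows "h <# S = h' <# S \<longleftrightarrow> inv h \<otimes> h' \<in> S"
proof
  assume eq: "h <# S = h' <# S"
  have "h' = h' \<otimes> \<one>" using h' by simp
  then have "h' \<in> h' <# S" using S unfolding lcos_elem by (metis subgroup.one_closed)
  then have "h' \<in> h <# S" using eq by simp
  then obtain s where s: "s \<in> S" "h' = h \<otimes> s" unfolding lcos_elem by auto
  have "s \<in> carrier G" using s S by (simp add: subgroup.mem_carrier)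
  then have "inv h \<otimes> h' = s" using s h by (simp add: m_assoc[symmetric])
  then show "inv h \<otimes> h' \<in> S" using s by simp
next
  assume a: "inv h \<otimes> h' \<in> S"
  have e: "h' = h \<otimes> (inv h \<otimes> h')" using h h' by (simp add: m_assoc[symmetric])
  have "h <# ((inv h \<otimes> h') <# S) = (h \<otimes> (inv h \<otimes> h')) <# S"
    using h h' S by (simp add: lcos_m_assoc subgroup.subset)
  then have "h' <# S = h <# ((inv h \<otimes> h') <# S)" using e by simp
  also have "\<dots> = h <# S" using lcos_subgroup_self[OF S a] by simp
  finally show "h <# S = h' <# S" by simp
qed

lemma card_lcos:
  assumes "S \<subseteq> carrier G" "h \<in> carrier G" shows "card (h <# S) = card S"
proof -
  have "inj_on (\<lambda>s. h \<otimes> s) S" using assms by (auto simp: inj_on_def subset_iff)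
  then show ?thesis by (simp add: lcos_image card_image)
qed

lemma card_conj:
  assumes "S \<subseteq> carrier G" "g \<in> carrier G" shows "card ((g <# S) #> inv g) = card S"
proof -
  have "inj_on (\<lambda>s. g \<otimes> s \<otimes> inv g) S" using assms by (auto simp: inj_on_def subset_iff)
  then show ?thesis by (simp add: conj_image card_image)
qed

lemma conj_subset_carrier:
  assumes "S \<subseteq> carrier G" "g \<in> carrier G" shows "(g <# S) #> inv g \<subseteq> carrier G"
  using assms by (auto simp: conj_elem subset_iff)

lemma conj_subgroup:
  assumes S: "subgroup S G" and g: "g \<in> carrier G"
  shows "subgroup ((g <# S) #> inv g) G"
proof (rule subgroupI)
  show "(g <# S) #> inv g \<subseteq> carrier G" using conj_subset_carrier S g subgroup.subset by metis
  have "g \<otimes> \<one> \<otimes> inv g \<in> (g <# S) #> inv g" unfolding conj_elem using S subgroup.one_closed by metis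
  then show "(g <# S) #> inv g \<noteq> {}" by auto
next
  fix a assume "a \<in> (g <# S) #> inv g"
  then obtain s where s: "s \<in> S" "a = g \<otimes> s \<otimes> inv g" by (auto simp: conj_elem)
  have sc: "s \<in> carrier G" using s S by (simp add: subgroup.mem_carrier)
  have "inv a = g \<otimes> inv s \<otimes> inv g" using s sc g by (simp add: inv_mult_group m_assoc)
  moreover have "inv s \<in> S" using s S by (simp add: subgroup.m_inv_closed)
  ultimately show "inv a \<in> (g <# S) #> inv g" unfolding conj_elem by auto
next
  fix a b assume "a \<in> (g <# S) #> inv g" "b \<in> (g <# S) #> inv g"
  then obtain s t where s: "s \<in> S" "a = g \<otimes> s \<otimes> inv g" and t: "t \<in> S" "b = g \<otimes> t \<otimes> inv g"
    by (auto simp: conj_elem)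
  have sc: "s \<in> carrier G" "t \<in> carrier G" using s t S by (simp_all add: subgroup.mem_carrier)
  have "a \<otimes> b = g \<otimes> (s \<otimes> t) \<otimes> inv g" using s t sc g by (simp add: m_assoc)
  moreover have "s \<otimes> t \<in> S" using s t S by (simp add: subgroup.m_closed)
  ultimately show "a \<otimes> b \<in> (g <# S) #> inv g" unfolding conj_elem by auto
qed

lemma conj_conj:
  assumes "S \<subseteq> carrier G" "g \<in> carrier G" "h \<in> carrier G"
  shows "(g <# ((h <# S) #> inv h)) #> inv g = ((g \<otimes> h) <# S) #> inv (g \<otimes> h)"
proof -
  have e: "\<And>s. s \<in> S \<Longrightarrow> g \<otimes> (h \<otimes> s \<otimes> inv h) \<otimes> inv g = g \<otimes> h \<otimes> s \<otimes> inv (g \<otimes> h)"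
    using assms by (auto simp: m_assoc inv_mult_group)
  show ?thesis
  proof (rule Set.set_eqI)
    fix x
    show "x \<in> (g <# ((h <# S) #> inv h)) #> inv g \<longleftrightarrow> x \<in> ((g \<otimes> h) <# S) #> inv (g \<otimes> h)"
    proof
      assume "x \<in> (g <# ((h <# S) #> inv h)) #> inv g"
      then obtain s' where s': "s' \<in> (h <# S) #> inv h" "x = g \<otimes> s' \<otimes> inv g" by (rule conj_elemE)
      then obtain s where s: "s \<in> S" "s' = h \<otimes> s \<otimes> inv h" by (metis conj_elemE)
      have "x = g \<otimes> h \<otimes> s \<otimes> inv (g \<otimes> h)" using s s' e by simp
      then show "x \<in> ((g \<otimes> h) <# S) #> inv (g \<otimes> h)" using conj_elemI[OF s(1)] by simp
    next
      assume "x \<in> ((g \<otimes> h) <# S) #> inv (g \<otimes> h)"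
      then obtain s where s: "s \<in> S" "x = g \<otimes> h \<otimes> s \<otimes> inv (g \<otimes> h)" by (rule conj_elemE)
      have "h \<otimes> s \<otimes> inv h \<in> (h <# S) #> inv h" using s(1) by (rule conj_elemI)
      moreover have "x = g \<otimes> (h \<otimes> s \<otimes> inv h) \<otimes> inv g" using s e by simp
      ultimately show "x \<in> (g <# ((h <# S) #> inv h)) #> inv g" using conj_elemI by metis
    qed
  qed
qed

lemma conj_one: assumes "S \<subseteq> carrier G" shows "(\<one> <# S) #> inv \<one> = S"
proof -
  have "(\<lambda>s. \<one> \<otimes> s \<otimes> inv \<one>) ` S = (\<lambda>s. s) ` S"
    by (rule image_cong) (use assms in \<open>auto simp: subset_iff\<close>)
  then show ?thesis by (simp add: conj_image)
qed

lemma conj_one': assumes "S \<subseteq> carrier G" shows "(\<one> <# S) #> \<one> = S"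
  using conj_one[OF assms] by simp

lemma conj_inv_conj:
  assumes "S \<subseteq> carrier G" "g \<in> carrier G"
  shows "(inv g <# ((g <# S) #> inv g)) #> inv (inv g) = S"
  using conj_conj[of S "inv g" g] assms by (simp add: conj_one')

lemma conj_mono: "S \<subseteq> T \<Longrightarrow> (g <# S) #> h \<subseteq> (g <# T) #> h"
  unfolding conj_image by auto

lemma subconj_subset: "I \<subseteq> L \<Longrightarrow> I \<subseteq> carrier G \<Longrightarrow> subconj G I L"
  unfolding subconj_def using conj_one one_closed by metis

lemma subconj_trans:
  assumes "subconj G I J" "subconj G J L" "I \<subseteq> carrier G"
  shows "subconj G I L"
proof -
  obtain g where g: "g \<in> carrier G" "(g <# I) #> inv g \<subseteq> J" using assms(1) by (auto simp: subconj_def)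
  obtain h where h: "h \<in> carrier G" "(h <# J) #> inv h \<subseteq> L" using assms(2) by (auto simp: subconj_def)
  have "((h \<otimes> g) <# I) #> inv (h \<otimes> g) = (h <# ((g <# I) #> inv g)) #> inv h"
    using conj_conj assms(3) g h by simp
  also have "\<dots> \<subseteq> (h <# J) #> inv h" using g(2) by (rule conj_mono)
  finally have "((h \<otimes> g) <# I) #> inv (h \<otimes> g) \<subseteq> L" using h(2) by simp
  moreover have "h \<otimes> g \<in> carrier G" using g h by simp
  ultimately show ?thesis unfolding subconj_def by metis
qed

lemma subconj_mono_left: "subconj G I L \<Longrightarrow> I' \<subseteq> I \<Longrightarrow> subconj G I' L"
  unfolding subconj_def by (meson conj_mono order_trans)

lemma subconj_mono_right: "subconj G I L \<Longrightarrow> L \<subseteq> L' \<Longrightarrow> subconj G I L'"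
  unfolding subconj_def by (meson order_trans)

end


definition act_on :: "('a, 'b) monoid_scheme \<Rightarrow> 'a set \<Rightarrow> 'z set \<Rightarrow> ('a \<Rightarrow> 'z \<Rightarrow> 'z) \<Rightarrow> bool" where
  "act_on G W Z act \<longleftrightarrow> (\<forall>x\<in>W. \<forall>z\<in>Z. act x z \<in> Z) \<and> (\<forall>z\<in>Z. act (one G) z = z)
     \<and> (\<forall>x\<in>W. \<forall>y\<in>W. \<forall>z\<in>Z. act (monoid.mult G x y) z = act x (act y z))"

definition fixset :: "('a \<Rightarrow> 'z \<Rightarrow> 'z) \<Rightarrow> 'a set \<Rightarrow> 'z set \<Rightarrow> 'z set" where
  "fixset act I Z = {z\<in>Z. \<forall>i\<in>I. act i z = z}"

lemma card_fibers:
  assumes "finite A" "\<And>b. b \<in> f ` A \<Longrightarrow> card {a\<in>A. f a = b} = k"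
  shows "card A = card (f ` A) * k"
proof -
  have A: "A = (\<Union>b\<in>f ` A. {a\<in>A. f a = b})" by auto
  have "card (\<Union>b\<in>f ` A. {a\<in>A. f a = b}) = (\<Sum>b\<in>f ` A. card {a\<in>A. f a = b})"
    by (rule card_UN_disjoint) (use assms(1) in auto)
  also have "\<dots> = (\<Sum>b\<in>f ` A. k)" using assms(2) by simp
  finally show ?thesis using A by simp
qed

lemma card_image_le_kernel:
  assumes "finite A" "\<And>x y. x \<in> A \<Longrightarrow> y \<in> A \<Longrightarrow> g x = g y \<Longrightarrow> f x = f y"
  shows "card (f ` A) \<le> card (g ` A)"
proof -
  have "f ` A = (\<lambda>u. f (inv_into A g u)) ` (g ` A)"
  proof (rule Set.set_eqI)
    fix u show "u \<in> f ` A \<longleftrightarrow> u \<in> (\<lambda>u. f (inv_into A g u)) ` (g ` A)"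
    proof
      assume "u \<in> f ` A"
      then obtain x where x: "x \<in> A" "u = f x" by auto
      have "inv_into A g (g x) \<in> A" "g (inv_into A g (g x)) = g x"
        using x by (auto simp: inv_into_into f_inv_into_f)
      then have "f (inv_into A g (g x)) = f x" using assms(2) x(1) by metis
      then show "u \<in> (\<lambda>u. f (inv_into A g u)) ` (g ` A)" using x by (metis image_eqI)
    next
      assume "u \<in> (\<lambda>u. f (inv_into A g u)) ` (g ` A)"
      then obtain x where x: "x \<in> A" "u = f (inv_into A g (g x))" by auto
      then show "u \<in> f ` A" by (metis image_eqI imageI inv_into_into)
    qed
  qed
  then show ?thesis using assms(1) by (metis card_image_le finite_imageI)
qed

lemma card_image_eq_kernel:
  assumes "finite A" "\<And>x y. x \<in> A \<Longrightarrow> y \<in> A \<Longrightarrow> g x = g y \<longleftrightarrow> f x = f y"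
  shows "card (f ` A) = card (g ` A)"
  using card_image_le_kernel[of A g f] card_image_le_kernel[of A f g] assms by (simp add: le_antisym)

context group begin

lemma act_onD:
  assumes "act_on G W Z act"
  shows "\<And>x z. x \<in> W \<Longrightarrow> z \<in> Z \<Longrightarrow> act x z \<in> Z"
    and "\<And>z. z \<in> Z \<Longrightarrow> act \<one> z = z"
    and "\<And>x y z. x \<in> W \<Longrightarrow> y \<in> W \<Longrightarrow> z \<in> Z \<Longrightarrow> act (x \<otimes> y) z = act x (act y z)"
  using assms unfolding act_on_def by auto

lemma act_inv_act:
  assumes "act_on G W Z act" "subgroup W G" "x \<in> W" "z \<in> Z"
  shows "act (inv x) (act x z) = z"
proof -
  have "inv x \<in> W" using assms by (simp add: subgroup.m_inv_closed)
  then have "act (inv x) (act x z) = act (inv x \<otimes> x) z" using act_onD(3)[OF assms(1)] assms by simp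
  also have "inv x \<otimes> x = \<one>" using assms by (simp add: subgroup.mem_carrier)
  finally show ?thesis using act_onD(2)[OF assms(1) assms(4)] by simp
qed

lemma stab_kernel:
  assumes act: "act_on G W Z act" and W: "subgroup W G" and z: "z \<in> Z" and h: "h \<in> W" and h': "h' \<in> W"
  shows "act h z = act h' z \<longleftrightarrow> inv h \<otimes> h' \<in> {k\<in>W. act k z = z}"
proof -
  have ih: "inv h \<in> W" using W h by (simp add: subgroup.m_inv_closed)
  have k: "inv h \<otimes> h' \<in> W" using W ih h' by (simp add: subgroup.m_closed)
  have hc: "h \<in> carrier G" "h' \<in> carrier G" using W h h' by (simp_all add: subgroup.mem_carrier)
  have e1: "act (inv h \<otimes> h') z = act (inv h) (act h' z)" using act_onD(3)[OF act ih h' z] .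
  have e2: "act h (act (inv h \<otimes> h') z) = act h' z"
    using act_onD(3)[OF act h k z] hc by simp
  show ?thesis
  proof
    assume "act h z = act h' z"
    then have "act (inv h \<otimes> h') z = z" using e1 act_inv_act[OF act W h z] by simp
    then show "inv h \<otimes> h' \<in> {k\<in>W. act k z = z}" using k by simp
  next
    assume "inv h \<otimes> h' \<in> {k\<in>W. act k z = z}"
    then show "act h z = act h' z" using e2 by simp
  qed
qed

lemma stab_subgroup:
  assumes act: "act_on G W Z act" and W: "subgroup W G" and z: "z \<in> Z"
  shows "subgroup {k\<in>W. act k z = z} G"
proof (rule subgroupI)
  show "{k\<in>W. act k z = z} \<subseteq> carrier G" using W subgroup.subset by fastforce
  have "\<one> \<in> {k\<in>W. act k z = z}" using W act_onD(2)[OF act z] by (simp add: subgroup.one_closed)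
  then show "{k\<in>W. act k z = z} \<noteq> {}" by auto
next
  fix a assume a: "a \<in> {k\<in>W. act k z = z}"
  then have "act (inv a) z = z" using act_inv_act[OF act W _ z, of a] by simp
  then show "inv a \<in> {k\<in>W. act k z = z}" using a W by (simp add: subgroup.m_inv_closed)
next
  fix a b assume a: "a \<in> {k\<in>W. act k z = z}" and b: "b \<in> {k\<in>W. act k z = z}"
  then have "act (a \<otimes> b) z = z" using act_onD(3)[OF act _ _ z, of a b] by simp
  then show "a \<otimes> b \<in> {k\<in>W. act k z = z}" using a b W by (simp add: subgroup.m_closed)
qed

lemma orbit_stabilizer:
  assumes act: "act_on G W Z act" and W: "subgroup W G" and fin: "finite W" and z: "z \<in> Z"
  shows "card W = card ((\<lambda>h. act h z) ` W) * card {k\<in>W. act k z = z}"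
proof (rule card_fibers[OF fin])
  fix b assume "b \<in> (\<lambda>h. act h z) ` W"
  then obtain h where h: "h \<in> W" "b = act h z" by auto
  let ?S = "{k\<in>W. act k z = z}"
  have S: "subgroup ?S G" by (rule stab_subgroup[OF act W z])
  have hc: "h \<in> carrier G" using W h by (simp add: subgroup.mem_carrier)
  have "{a\<in>W. act a z = b} = h <# ?S"
  proof (rule Set.set_eqI)
    fix a show "a \<in> {a\<in>W. act a z = b} \<longleftrightarrow> a \<in> h <# ?S"
    proof
      assume a: "a \<in> {a\<in>W. act a z = b}"
      then have "inv h \<otimes> a \<in> ?S" using stab_kernel[OF act W z h(1), of a] h by simp
      moreover have "a = h \<otimes> (inv h \<otimes> a)" using a hc W by (simp add: subgroup.mem_carrier)
      ultimately show "a \<in> h <# ?S" unfolding lcos_elem by blast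
    next
      assume "a \<in> h <# ?S"
      then obtain s where s: "s \<in> ?S" "a = h \<otimes> s" unfolding lcos_elem by blast
      then have aX: "a \<in> W" using h W by (simp add: subgroup.m_closed)
      have sc: "s \<in> carrier G" using s W by (simp add: subgroup.mem_carrier)
      have "inv h \<otimes> a = s" using s hc sc by simp
      then have "act h z = act a z" using stab_kernel[OF act W z h(1) aX] s by simp
      then show "a \<in> {a\<in>W. act a z = b}" using aX h by simp
    qed
  qed
  then show "card {a\<in>W. act a z = b} = card ?S"
    using card_lcos[OF _ hc, of ?S] S subgroup.subset by metis
qed

end


context group begin

lemma set_mult_elem: "x \<in> H <#> K \<longleftrightarrow> (\<exists>h\<in>H. \<exists>k\<in>K. x = h \<otimes> k)"
  by (auto simp: set_mult_def)

lemma orbit_subset: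
  assumes act: "act_on G W Z act" and z: "z \<in> Z"
  shows "(\<lambda>h. act h z) ` W \<subseteq> Z"
  using act_onD(1)[OF act _ z] by auto

lemma orbit_self:
  assumes act: "act_on G W Z act" and W: "subgroup W G" and z: "z \<in> Z"
  shows "z \<in> (\<lambda>h. act h z) ` W"
proof -
  have "act \<one> z = z" using act_onD(2)[OF act z] .
  moreover have "\<one> \<in> W" using W by (simp add: subgroup.one_closed)
  ultimately show ?thesis by (metis image_eqI)
qed

lemma act_on_minus_orbit:
  assumes act: "act_on G W Z act" and W: "subgroup W G" and z: "z \<in> Z"
  shows "act_on G W (Z - (\<lambda>h. act h z) ` W) act"
  unfolding act_on_def
proof (intro conjI ballI)
  fix x w assume x: "x \<in> W" and w: "w \<in> Z - (\<lambda>h. act h z) ` W"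
  have "act x w \<in> Z" using act_onD(1)[OF act x] w by simp
  moreover have "act x w \<notin> (\<lambda>h. act h z) ` W"
  proof
    assume "act x w \<in> (\<lambda>h. act h z) ` W"
    then obtain h where h: "h \<in> W" "act x w = act h z" by auto
    have ix: "inv x \<in> W" using W x by (simp add: subgroup.m_inv_closed)
    have "w = act (inv x) (act x w)" using act_inv_act[OF act W x] w by simp
    also have "\<dots> = act (inv x) (act h z)" using h by simp
    also have "\<dots> = act (inv x \<otimes> h) z" using act_onD(3)[OF act ix h(1) z] by simp
    finally have "w \<in> (\<lambda>h. act h z) ` W" using ix h(1) W by (simp add: subgroup.m_closed)
    then show False using w by simp
  qed
  ultimately show "act x w \<in> Z - (\<lambda>h. act h z) ` W" by simp
next
  fix w assume "w \<in> Z - (\<lambda>h. act h z) ` W"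
  then show "act (one G) w = w" using act_onD(2)[OF act] by simp
next
  fix x y w assume "x \<in> W" "y \<in> W" "w \<in> Z - (\<lambda>h. act h z) ` W"
  then show "act (monoid.mult G x y) w = act x (act y w)" using act_onD(3)[OF act] by simp
qed

lemma pgroup_fix_cong_aux:
  assumes p: "Factorial_Ring.prime p" and Q: "subgroup Q G" and cQ: "card Q = p ^ a" 
  shows "\<forall>Z. card Z = n \<longrightarrow> finite Z \<longrightarrow> act_on G Q Z act \<longrightarrow>
            int p dvd int (card Z) - int (card (fixset act Q Z))"
proof (induction n rule: less_induct)
  case (less n)
  show ?case
  proof (intro allI impI)
    fix Z :: "'c set" assume cZ: "card Z = n" and fZ: "finite Z" and act: "act_on G Q Z act"
    show "int p dvd int (card Z) - int (card (fixset act Q Z))"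
    proof (cases "\<forall>z\<in>Z. \<forall>q\<in>Q. act q z = z")
      case True
      then have "fixset act Q Z = Z" unfolding fixset_def by auto
      then show ?thesis by simp
    next
      case False
      then obtain z q0 where z: "z \<in> Z" and q0: "q0 \<in> Q" "act q0 z \<noteq> z" by auto
      let ?O = "(\<lambda>h. act h z) ` Q"
      have "card Q > 0" using cQ p by (simp add: prime_gt_0_nat)
      then have fQ: "finite Q" by (rule card_ge_0_finite)
      have os: "card Q = card ?O * card {k\<in>Q. act k z = z}"
        by (rule orbit_stabilizer[OF act Q fQ z])
      then have "card ?O dvd p ^ a" using cQ by (metis dvd_triv_left)
      then obtain j where j: "card ?O = p ^ j" using divides_primepow_nat[OF p] by auto
      have Osub: "?O \<subseteq> Z" by (rule orbit_subset[OF act z])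
      have zO: "z \<in> ?O" by (rule orbit_self[OF act Q z])
      have "j \<noteq> 0"
      proof
        assume "j = 0"
        then have "card ?O = 1" using j by simp
        then obtain u where u: "?O = {u}" by (rule card_1_singletonE)
        have "act q0 z \<in> ?O" using q0(1) by simp
        then have "act q0 z = z" using zO u by simp
        then show False using q0 by simp
      qed
      then have pO: "p dvd card ?O" using j by simp
      let ?Z' = "Z - ?O"
      have fO: "finite ?O" using fQ by simp
      have cZ': "card ?Z' = card Z - card ?O" using Osub fO by (simp add: card_Diff_subset)
      have "card ?O > 0" using fO zO by (auto simp: card_gt_0_iff)
      moreover have "card ?O \<le> card Z" using Osub fZ by (rule card_mono[rotated])
      ultimately have lt: "card ?Z' < n" using cZ cZ' by simp
      have act': "act_on G Q ?Z' act" by (rule act_on_minus_orbit[OF act Q z])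
      have IH: "int p dvd int (card ?Z') - int (card (fixset act Q ?Z'))"
        using less[OF lt] act' fZ by simp
      have fixeq: "fixset act Q Z = fixset act Q ?Z'"
      proof -
        have "\<And>w. w \<in> fixset act Q Z \<Longrightarrow> w \<notin> ?O"
        proof
          fix w assume wf: "w \<in> fixset act Q Z" and wO: "w \<in> ?O"
          then obtain h where h: "h \<in> Q" "w = act h z" by auto
          have hc: "h \<in> carrier G" using Q h by (simp add: subgroup.mem_carrier)
          have ih: "inv h \<in> Q" using Q h by (simp add: subgroup.m_inv_closed)
          have zw: "z = act (inv h) w" using act_inv_act[OF act Q h(1) z] h by simp
          have "act q0 z = z"
          proof -
            have q0c: "q0 \<in> carrier G" using Q q0 by (simp add: subgroup.mem_carrier)
            have k: "h \<otimes> q0 \<otimes> inv h \<in> Q" using Q h ih q0 by (simp add: subgroup.m_closed)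
            have wZ: "w \<in> Z" using wf unfolding fixset_def by simp
            have wk: "act (h \<otimes> q0 \<otimes> inv h) w = w" using wf k unfolding fixset_def by simp
            have "q0 \<otimes> inv h = inv h \<otimes> (h \<otimes> q0 \<otimes> inv h)" using hc q0c by (simp add: m_assoc)
            then have "act q0 z = act (inv h \<otimes> (h \<otimes> q0 \<otimes> inv h)) w"
              using zw act_onD(3)[OF act q0(1) ih wZ] by simp
            also have "\<dots> = act (inv h) (act (h \<otimes> q0 \<otimes> inv h) w)"
              using act_onD(3)[OF act ih k wZ] .
            finally show ?thesis using wk zw by simp
          qed
          then show False using q0 by simp
        qed
        then show ?thesis unfolding fixset_def by auto
      qed
      have "int (card Z) = int (card ?Z') + int (card ?O)"
        using cZ' Osub fO fZ by (simp add: card_mono of_nat_diff)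
      then have "int (card Z) - int (card (fixset act Q Z))
          = (int (card ?Z') - int (card (fixset act Q ?Z'))) + int (card ?O)"
        using fixeq by simp
      moreover have "int p dvd int (card ?O)" using pO by simp
      ultimately show ?thesis using IH by simp
    qed
  qed
qed

lemma pgroup_fix_cong:
  assumes "Factorial_Ring.prime p" "subgroup Q G" "card Q = p ^ a" "finite Z" "act_on G Q Z act"
  shows "int p dvd int (card Z) - int (card (fixset act Q Z))"
  using pgroup_fix_cong_aux[OF assms(1-3)] assms(4,5) by blast

end


definition realizable :: "('a, 'b) monoid_scheme \<Rightarrow> 'a set \<Rightarrow> ('a set \<Rightarrow> int) \<Rightarrow> bool" where
  "realizable G W \<phi> \<longleftrightarrow> (\<exists>c. \<forall>I\<in>subgroups_of G W. mark G W I c = \<phi> I)"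

lemma mark_add: "mark G W I (\<lambda>J. c J + d J) = mark G W I c + mark G W I d"
  unfolding mark_def by (simp add: sum.distrib distrib_right)

lemma mark_smult: "mark G W I (\<lambda>J. k * c J) = k * mark G W I c"
  unfolding mark_def by (simp add: sum_distrib_left mult.assoc)

lemma mark_zero: "mark G W I (\<lambda>J. 0) = 0"
  unfolding mark_def by simp

lemma mark_sum: "mark G W I (\<lambda>J. \<Sum>a\<in>A. f a J) = (\<Sum>a\<in>A. mark G W I (f a))"
  unfolding mark_def by (simp add: sum_distrib_right sum.swap[of _ A])

lemma mark_delta:
  assumes "finite (subgroups_of G W)" "J \<in> subgroups_of G W"
  shows "mark G W I (\<lambda>K. if K = J then 1 else 0) = int (fixed_cosets G W J I)"
proof -
  have "mark G W I (\<lambda>K. if K = J then 1 else 0)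
      = (\<Sum>K\<in>subgroups_of G W. if K = J then int (fixed_cosets G W K I) else 0)"
    unfolding mark_def by (intro sum.cong) auto
  also have "\<dots> = int (fixed_cosets G W J I)" using assms by (simp add: sum.delta)
  finally show ?thesis .
qed

lemma realizable_zero: "realizable G W (\<lambda>I. 0)"
  unfolding realizable_def using mark_zero by metis

lemma realizable_add:
  assumes "realizable G W \<phi>" "realizable G W \<psi>"
  shows "realizable G W (\<lambda>I. \<phi> I + \<psi> I)"
proof -
  obtain c where c: "\<forall>I\<in>subgroups_of G W. mark G W I c = \<phi> I" using assms(1) realizable_def by metis
  obtain d where d: "\<forall>I\<in>subgroups_of G W. mark G W I d = \<psi> I" using assms(2) realizable_def by metis
  have "\<forall>I\<in>subgroups_of G W. mark G W I (\<lambda>J. c J + d J) = \<phi> I + \<psi> I"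
    using c d by (simp add: mark_add)
  then show ?thesis unfolding realizable_def by blast
qed

lemma realizable_smult:
  assumes "realizable G W \<phi>"
  shows "realizable G W (\<lambda>I. k * \<phi> I)"
proof -
  obtain c where c: "\<forall>I\<in>subgroups_of G W. mark G W I c = \<phi> I" using assms(1) realizable_def by metis
  have "\<forall>I\<in>subgroups_of G W. mark G W I (\<lambda>J. k * c J) = k * \<phi> I"
    using c by (simp add: mark_smult)
  then show ?thesis unfolding realizable_def by blast
qed

lemma realizable_sum:
  assumes "finite A" "\<And>a. a \<in> A \<Longrightarrow> realizable G W (f a)"
  shows "realizable G W (\<lambda>I. \<Sum>a\<in>A. f a I)"
  using assms
proof (induction A rule: finite_induct)
  case empty
  then show ?case using realizable_zero by simp
next
  case (insert x F)
  then have "realizable G W (\<lambda>I. f x I + (\<Sum>a\<in>F. f a I))"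
    by (intro realizable_add) auto
  then show ?case using insert by simp
qed

context group begin

lemma coset_space_elem: "C \<in> coset_space G W J \<longleftrightarrow> (\<exists>h\<in>W. C = h <# J)"
  unfolding coset_space_def by auto

lemma coset_act:
  assumes W: "subgroup W G" and J: "subgroup J G"
  shows "act_on G W (coset_space G W J) (\<lambda>x C. x <# C)"
  unfolding act_on_def
proof (intro conjI ballI)
  have Jc: "J \<subseteq> carrier G" using J by (rule subgroup.subset)
  fix x C assume x: "x \<in> W" and C: "C \<in> coset_space G W J"
  then obtain h where h: "h \<in> W" "C = h <# J" unfolding coset_space_elem by blast
  have "x <# C = (x \<otimes> h) <# J" using h x W Jc by (simp add: lcos_m_assoc subgroup.mem_carrier)
  moreover have "x \<otimes> h \<in> W" using x h W by (simp add: subgroup.m_closed)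
  ultimately show "x <# C \<in> coset_space G W J" unfolding coset_space_elem by blast
next
  have Jc: "J \<subseteq> carrier G" using J by (rule subgroup.subset)
  fix C assume C: "C \<in> coset_space G W J"
  then obtain h where h: "h \<in> W" "C = h <# J" unfolding coset_space_elem by blast
  have "C \<subseteq> carrier G" using h W Jc by (simp add: l_coset_subset_G subgroup.mem_carrier)
  then show "one G <# C = C" by (simp add: lcos_mult_one)
next
  have Jc: "J \<subseteq> carrier G" using J by (rule subgroup.subset)
  fix x y C assume x: "x \<in> W" and y: "y \<in> W" and C: "C \<in> coset_space G W J"
  then obtain h where h: "h \<in> W" "C = h <# J" unfolding coset_space_elem by blast
  have "C \<subseteq> carrier G" using h W Jc by (simp add: l_coset_subset_G subgroup.mem_carrier)
  then show "monoid.mult G x y <# C = x <# (y <# C)"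
    using x y W by (simp add: lcos_m_assoc subgroup.mem_carrier)
qed

lemma fixed_cosets_fixset:
  "fixed_cosets G W J I = card (fixset (\<lambda>x C. x <# C) I (coset_space G W J))"
  unfolding fixed_cosets_def fixset_def by simp

lemma fixset_image:
  "fixset act I (F ` A) = F ` {h\<in>A. \<forall>i\<in>I. act i (F h) = F h}"
  unfolding fixset_def by auto

lemma finite_subgroups_of:
  assumes "finite (carrier G)" shows "finite (subgroups_of G W)"
proof -
  have "subgroups_of G W \<subseteq> Pow (carrier G)" unfolding subgroups_of_def using subgroup.subset by auto
  then show ?thesis using assms by (meson finite_Pow_iff finite_subset)
qed

lemma orbit_fix_card:
  assumes act: "act_on G W Z act" and W: "subgroup W G" and fin: "finite (carrier G)"
    and z: "z \<in> Z" and I: "I \<subseteq> W"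
  shows "card (fixset act I ((\<lambda>h. act h z) ` W)) = fixed_cosets G W {k\<in>W. act k z = z} I"
proof -
  let ?S = "{k\<in>W. act k z = z}"
  have S: "subgroup ?S G" by (rule stab_subgroup[OF act W z])
  have Sc: "?S \<subseteq> carrier G" using S by (rule subgroup.subset)
  have Wc: "W \<subseteq> carrier G" using W by (rule subgroup.subset)
  have fW: "finite W" using fin Wc finite_subset by metis
  let ?A = "{h\<in>W. \<forall>i\<in>I. act i (act h z) = act h z}"
  let ?B = "{h\<in>W. \<forall>i\<in>I. i <# (h <# ?S) = h <# ?S}"
  have AB: "?A = ?B"
  proof (rule Set.set_eqI)
    fix h
    show "h \<in> ?A \<longleftrightarrow> h \<in> ?B"
    proof (cases "h \<in> W")
      case True
      have "\<And>i. i \<in> I \<Longrightarrow> act i (act h z) = act h z \<longleftrightarrow> i <# (h <# ?S) = h <# ?S"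
      proof -
        fix i assume i: "i \<in> I"
        have iW: "i \<in> W" using i I by auto
        have ih: "i \<otimes> h \<in> W" using iW True W by (simp add: subgroup.m_closed)
        have c: "i \<in> carrier G" "h \<in> carrier G" using iW True Wc by auto
        have "act i (act h z) = act (i \<otimes> h) z" using act_onD(3)[OF act iW True z] by simp
        then have "act i (act h z) = act h z \<longleftrightarrow> inv (i \<otimes> h) \<otimes> h \<in> ?S"
          using stab_kernel[OF act W z ih True] by simp
        also have "\<dots> \<longleftrightarrow> (i \<otimes> h) <# ?S = h <# ?S" using lcos_eq_iff[OF S, of "i \<otimes> h" h] c by simp
        also have "(i \<otimes> h) <# ?S = i <# (h <# ?S)" using c Sc by (simp add: lcos_m_assoc)
        finally show "act i (act h z) = act h z \<longleftrightarrow> i <# (h <# ?S) = h <# ?S" .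
      qed
      then show ?thesis using True by auto
    next
      case False then show ?thesis by simp
    qed
  qed
  have "card (fixset act I ((\<lambda>h. act h z) ` W)) = card ((\<lambda>h. act h z) ` ?A)"
    by (simp add: fixset_image)
  also have "\<dots> = card ((\<lambda>h. h <# ?S) ` ?A)"
  proof (rule card_image_eq_kernel)
    show "finite ?A" using fW by simp
    fix x y assume "x \<in> ?A" "y \<in> ?A"
    then have xy: "x \<in> W" "y \<in> W" by auto
    then show "x <# ?S = y <# ?S \<longleftrightarrow> act x z = act y z"
      using lcos_eq_iff[OF S, of x y] stab_kernel[OF act W z xy] Wc by auto
  qed
  also have "\<dots> = card (fixset (\<lambda>x C. x <# C) I ((\<lambda>h. h <# ?S) ` W))"
    using AB by (simp add: fixset_image)
  also have "\<dots> = fixed_cosets G W ?S I"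
    unfolding fixed_cosets_fixset coset_space_def by simp
  finally show ?thesis .
qed

lemma realize_action_aux:
  assumes W: "subgroup W G" and fin: "finite (carrier G)"
  shows "\<forall>Z. card Z = n \<longrightarrow> finite Z \<longrightarrow> act_on G W Z act \<longrightarrow>
           (\<exists>c. \<forall>I. I \<subseteq> W \<longrightarrow> mark G W I c = int (card (fixset act I Z)))"
proof (induction n rule: less_induct)
  case (less n)
  show ?case
  proof (intro allI impI)
    fix Z :: "'c set" assume cZ: "card Z = n" and fZ: "finite Z" and act: "act_on G W Z act"
    show "\<exists>c. \<forall>I. I \<subseteq> W \<longrightarrow> mark G W I c = int (card (fixset act I Z))"
    proof (cases "Z = {}")
      case True
      then have "\<And>I. fixset act I Z = {}" unfolding fixset_def by auto
      then show ?thesis using mark_zero by (metis card.empty of_nat_0)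
    next
      case False
      then obtain z where z: "z \<in> Z" by auto
      let ?O = "(\<lambda>h. act h z) ` W"
      let ?S = "{k\<in>W. act k z = z}"
      have Wc: "W \<subseteq> carrier G" using W by (rule subgroup.subset)
      have fW: "finite W" using fin Wc finite_subset by metis
      have Osub: "?O \<subseteq> Z" by (rule orbit_subset[OF act z])
      have zO: "z \<in> ?O" by (rule orbit_self[OF act W z])
      have fO: "finite ?O" using fW by simp
      let ?Z' = "Z - ?O"
      have cZ': "card ?Z' = card Z - card ?O" using Osub fO by (simp add: card_Diff_subset)
      have "card ?O > 0" using fO zO by (auto simp: card_gt_0_iff)
      moreover have "card ?O \<le> card Z" using Osub fZ by (rule card_mono[rotated])
      ultimately have lt: "card ?Z' < n" using cZ cZ' by simp
      have act': "act_on G W ?Z' act" by (rule act_on_minus_orbit[OF act W z])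
      obtain c' where c': "\<forall>I. I \<subseteq> W \<longrightarrow> mark G W I c' = int (card (fixset act I ?Z'))"
        using less[OF lt] act' fZ by blast
      have S: "subgroup ?S G" by (rule stab_subgroup[OF act W z])
      have Ssub: "?S \<in> subgroups_of G W" using S unfolding subgroups_of_def by auto
      have fsub: "finite (subgroups_of G W)" by (rule finite_subgroups_of[OF fin])
      let ?c = "\<lambda>K. c' K + (if K = ?S then 1 else 0)"
      have "\<forall>I. I \<subseteq> W \<longrightarrow> mark G W I ?c = int (card (fixset act I Z))"
      proof (intro allI impI)
        fix I assume I: "I \<subseteq> W"
        have "mark G W I ?c = mark G W I c' + int (fixed_cosets G W ?S I)"
          using mark_add[of G W I c' "\<lambda>K. if K = ?S then 1 else 0"] mark_delta[OF fsub Ssub] by simp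
        also have "\<dots> = int (card (fixset act I ?Z')) + int (card (fixset act I ?O))"
          using c' I orbit_fix_card[OF act W fin z I] by simp
        also have "\<dots> = int (card (fixset act I Z))"
        proof -
          have "fixset act I Z = fixset act I ?Z' \<union> fixset act I ?O"
            using Osub unfolding fixset_def by auto
          moreover have "fixset act I ?Z' \<inter> fixset act I ?O = {}" unfolding fixset_def by auto
          moreover have "finite (fixset act I ?Z')" "finite (fixset act I ?O)"
            using fZ fO unfolding fixset_def by auto
          ultimately show ?thesis by (simp add: card_Un_disjoint)
        qed
        finally show "mark G W I ?c = int (card (fixset act I Z))" .
      qed
      then show ?thesis by blast
    qed
  qed
qed

lemma realize_action:
  assumes "subgroup W G" "finite (carrier G)" "finite Z" "act_on G W Z act"
  shows "\<exists>c. \<forall>I. I \<subseteq> W \<longrightarrow> mark G W I c = int (card (fixset act I Z))"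
  using realize_action_aux[OF assms(1,2)] assms(3,4) by blast

lemma realizable_pair:
  assumes W: "subgroup W G" and fin: "finite (carrier G)"
    and J: "J \<in> subgroups_of G W" and J': "J' \<in> subgroups_of G W"
  shows "realizable G W (\<lambda>I. int (fixed_cosets G W J I) * int (fixed_cosets G W J' I))"
proof -
  let ?Y = "coset_space G W J" and ?Y' = "coset_space G W J'"
  let ?act = "\<lambda>x (C, C'). (l_coset G x C, l_coset G x C')"
  have Js: "subgroup J G" "subgroup J' G" using J J' unfolding subgroups_of_def by auto
  have a1: "act_on G W ?Y (\<lambda>x C. x <# C)" by (rule coset_act[OF W Js(1)])
  have a2: "act_on G W ?Y' (\<lambda>x C. x <# C)" by (rule coset_act[OF W Js(2)])
  have act: "act_on G W (?Y \<times> ?Y') ?act"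
    unfolding act_on_def
  proof (intro conjI ballI)
    fix x z assume "x \<in> W" "z \<in> ?Y \<times> ?Y'"
    then show "?act x z \<in> ?Y \<times> ?Y'" using act_onD(1)[OF a1] act_onD(1)[OF a2] by (cases z) simp
  next
    fix z assume "z \<in> ?Y \<times> ?Y'"
    then show "?act (one G) z = z" using act_onD(2)[OF a1] act_onD(2)[OF a2] by (cases z) simp
  next
    fix x y z assume "x \<in> W" "y \<in> W" "z \<in> ?Y \<times> ?Y'"
    then show "?act (monoid.mult G x y) z = ?act x (?act y z)"
      using act_onD(3)[OF a1] act_onD(3)[OF a2] by (cases z) simp
  qed
  have Wc: "W \<subseteq> carrier G" using W by (rule subgroup.subset)
  have fW: "finite W" using fin Wc finite_subset by metis
  have fY: "finite (?Y \<times> ?Y')" using fW unfolding coset_space_def by simp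
  obtain c where c: "\<forall>I. I \<subseteq> W \<longrightarrow> mark G W I c = int (card (fixset ?act I (?Y \<times> ?Y')))"
    using realize_action[OF W fin fY act] by blast
  have "\<And>I. fixset ?act I (?Y \<times> ?Y') = fixset (\<lambda>x C. x <# C) I ?Y \<times> fixset (\<lambda>x C. x <# C) I ?Y'"
    unfolding fixset_def by auto
  then have "\<forall>I\<in>subgroups_of G W. mark G W I c = int (fixed_cosets G W J I) * int (fixed_cosets G W J' I)"
    using c unfolding fixed_cosets_fixset subgroups_of_def by (simp add: card_cartesian_product)
  then show ?thesis unfolding realizable_def by blast
qed

lemma realizable_mult:
  assumes W: "subgroup W G" and fin: "finite (carrier G)"
    and r1: "realizable G W \<phi>" and r2: "realizable G W \<psi>"
  shows "realizable G W (\<lambda>I. \<phi> I * \<psi> I)"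
proof -
  obtain c where c: "\<forall>I\<in>subgroups_of G W. mark G W I c = \<phi> I" using r1 realizable_def by metis
  obtain d where d: "\<forall>I\<in>subgroups_of G W. mark G W I d = \<psi> I" using r2 realizable_def by metis
  let ?A = "subgroups_of G W"
  have fA: "finite ?A" by (rule finite_subgroups_of[OF fin])
  have eq: "\<And>I. mark G W I c * mark G W I d = (\<Sum>J\<in>?A. \<Sum>J'\<in>?A. (c J * d J') *
       (int (fixed_cosets G W J I) * int (fixed_cosets G W J' I)))"
    unfolding mark_def sum_product by (intro sum.cong refl) (simp add: algebra_simps)
  have "realizable G W (\<lambda>I. \<Sum>J\<in>?A. \<Sum>J'\<in>?A. (c J * d J') *
       (int (fixed_cosets G W J I) * int (fixed_cosets G W J' I)))"
  proof (rule realizable_sum[OF fA])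
    fix J assume J: "J \<in> ?A"
    show "realizable G W (\<lambda>I. \<Sum>J'\<in>?A. (c J * d J') *
       (int (fixed_cosets G W J I) * int (fixed_cosets G W J' I)))"
    proof (rule realizable_sum[OF fA])
      fix J' assume J': "J' \<in> ?A"
      show "realizable G W (\<lambda>I. (c J * d J') *
       (int (fixed_cosets G W J I) * int (fixed_cosets G W J' I)))"
        by (rule realizable_smult[OF realizable_pair[OF W fin J J']])
    qed
  qed
  then obtain e where e: "\<forall>I\<in>?A. mark G W I e = (\<Sum>J\<in>?A. \<Sum>J'\<in>?A. (c J * d J') *
       (int (fixed_cosets G W J I) * int (fixed_cosets G W J' I)))" unfolding realizable_def by blast
  have "\<forall>I\<in>?A. mark G W I e = \<phi> I * \<psi> I" using e c d by (simp add: eq[symmetric])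
  then show ?thesis unfolding realizable_def by blast
qed

end


context group begin

lemma set_mult_elemI: "h \<in> H \<Longrightarrow> k \<in> K \<Longrightarrow> h \<otimes> k \<in> H <#> K"
  unfolding set_mult_def by auto

lemma set_mult_elemE: "x \<in> H <#> K \<Longrightarrow> (\<And>h k. h \<in> H \<Longrightarrow> k \<in> K \<Longrightarrow> x = h \<otimes> k \<Longrightarrow> P) \<Longrightarrow> P"
  unfolding set_mult_def by auto

lemma setmult_subgroup:
  assumes I: "subgroup I G" and Q: "subgroup Q G"
    and norm: "\<And>q i. q \<in> Q \<Longrightarrow> i \<in> I \<Longrightarrow> inv q \<otimes> i \<otimes> q \<in> I"
  shows "subgroup (I <#> Q) G"
proof (rule subgroupI)
  have Ic: "I \<subseteq> carrier G" and Qc: "Q \<subseteq> carrier G" using I Q by (simp_all add: subgroup.subset)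
  show "I <#> Q \<subseteq> carrier G" using Ic Qc by (rule setmult_subset_G)
  have "\<one> \<otimes> \<one> \<in> I <#> Q" by (rule set_mult_elemI[OF subgroup.one_closed[OF I] subgroup.one_closed[OF Q]])
  then show "I <#> Q \<noteq> {}" by auto
next
  have Ic: "I \<subseteq> carrier G" and Qc: "Q \<subseteq> carrier G" using I Q by (simp_all add: subgroup.subset)
  fix x assume "x \<in> I <#> Q"
  then obtain i q where iq: "i \<in> I" "q \<in> Q" "x = i \<otimes> q" by (rule set_mult_elemE)
  have c: "i \<in> carrier G" "q \<in> carrier G" using iq Ic Qc by auto
  have "inv x = (inv q \<otimes> inv i \<otimes> q) \<otimes> inv q" using c iq by (simp add: inv_mult_group m_assoc)
  moreover have "inv q \<otimes> inv i \<otimes> q \<in> I" using norm iq I by (simp add: subgroup.m_inv_closed)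
  moreover have "inv q \<in> Q" using iq Q by (simp add: subgroup.m_inv_closed)
  ultimately show "inv x \<in> I <#> Q" using set_mult_elemI by metis
next
  have Ic: "I \<subseteq> carrier G" and Qc: "Q \<subseteq> carrier G" using I Q by (simp_all add: subgroup.subset)
  fix x y assume "x \<in> I <#> Q" "y \<in> I <#> Q"
  then obtain i q j r where iq: "i \<in> I" "q \<in> Q" "x = i \<otimes> q" and jr: "j \<in> I" "r \<in> Q" "y = j \<otimes> r"
    by (metis set_mult_elemE)
  have c: "i \<in> carrier G" "q \<in> carrier G" "j \<in> carrier G" "r \<in> carrier G" using iq jr Ic Qc by auto
  have "x \<otimes> y = (i \<otimes> (q \<otimes> j \<otimes> inv q)) \<otimes> (q \<otimes> r)" using c iq jr by (simp add: m_assoc)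
  moreover have "q \<otimes> j \<otimes> inv q \<in> I"
    using norm[of "inv q" j] iq jr Q c by (simp add: subgroup.m_inv_closed)
  then have "i \<otimes> (q \<otimes> j \<otimes> inv q) \<in> I" using iq I by (simp add: subgroup.m_closed)
  moreover have "q \<otimes> r \<in> Q" using iq jr Q by (simp add: subgroup.m_closed)
  ultimately show "x \<otimes> y \<in> I <#> Q" using set_mult_elemI by metis
qed

lemma setmult_sub_left: "subgroup Q G \<Longrightarrow> I \<subseteq> carrier G \<Longrightarrow> I \<subseteq> I <#> Q"
proof
  fix i assume Q: "subgroup Q G" and I: "I \<subseteq> carrier G" and i: "i \<in> I"
  have "i = i \<otimes> \<one>" using i I by auto
  moreover have "i \<otimes> \<one> \<in> I <#> Q" by (rule set_mult_elemI[OF i subgroup.one_closed[OF Q]])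
  ultimately show "i \<in> I <#> Q" by simp
qed

lemma setmult_sub_right: "subgroup I G \<Longrightarrow> Q \<subseteq> carrier G \<Longrightarrow> Q \<subseteq> I <#> Q"
proof
  fix q assume I: "subgroup I G" and Q: "Q \<subseteq> carrier G" and q: "q \<in> Q"
  have "q = \<one> \<otimes> q" using q Q by auto
  moreover have "\<one> \<otimes> q \<in> I <#> Q" by (rule set_mult_elemI[OF subgroup.one_closed[OF I] q])
  ultimately show "q \<in> I <#> Q" by simp
qed

lemma setmult_sub_subgroup: "subgroup W G \<Longrightarrow> I \<subseteq> W \<Longrightarrow> Q \<subseteq> W \<Longrightarrow> I <#> Q \<subseteq> W"
proof
  fix x assume W: "subgroup W G" and "I \<subseteq> W" "Q \<subseteq> W" "x \<in> I <#> Q"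
  then obtain i q where "i \<in> W" "q \<in> W" "x = i \<otimes> q" by (metis set_mult_elemE subsetD)
  then show "x \<in> W" using W by (simp add: subgroup.m_closed)
qed

lemma cong_fixed:
  assumes fin: "finite (carrier G)" and W: "subgroup W G" and J: "subgroup J G" "J \<subseteq> W"
    and I: "subgroup I G" "I \<subseteq> W" and Q: "subgroup Q G" "Q \<subseteq> W"
    and p: "Factorial_Ring.prime p" and cQ: "card Q = p ^ a"
    and norm: "\<And>q i. q \<in> Q \<Longrightarrow> i \<in> I \<Longrightarrow> inv q \<otimes> i \<otimes> q \<in> I"
  shows "int p dvd int (fixed_cosets G W J I) - int (fixed_cosets G W J (I <#> Q))"
proof -
  let ?Y = "coset_space G W J"
  let ?act = "\<lambda>x C. l_coset G x C"
  let ?Z = "fixset ?act I ?Y"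
  have aY: "act_on G W ?Y ?act" by (rule coset_act[OF W J(1)])
  have Jc: "J \<subseteq> carrier G" using J by (simp add: subgroup.subset)
  have Wc: "W \<subseteq> carrier G" using W by (simp add: subgroup.subset)
  have Yc: "\<And>C. C \<in> ?Y \<Longrightarrow> C \<subseteq> carrier G"
  proof -
    fix C assume "C \<in> ?Y"
    then obtain h where "h \<in> W" "C = h <# J" unfolding coset_space_elem by blast
    then show "C \<subseteq> carrier G" using Jc Wc l_coset_subset_G[OF Jc, of h] by auto
  qed
  have aZ: "act_on G Q ?Z ?act"
    unfolding act_on_def
  proof (intro conjI ballI)
    fix q C assume q: "q \<in> Q" and C: "C \<in> ?Z"
    have CY: "C \<in> ?Y" and Cf: "\<forall>i\<in>I. i <# C = C" using C unfolding fixset_def by auto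
    have qW: "q \<in> W" using q Q by auto
    have qc: "q \<in> carrier G" using qW Wc by auto
    have "q <# C \<in> ?Y" using act_onD(1)[OF aY qW CY] .
    moreover have "\<forall>i\<in>I. i <# (q <# C) = q <# C"
    proof
      fix i assume i: "i \<in> I"
      have ic: "i \<in> carrier G" using i I Wc by auto
      have k: "inv q \<otimes> i \<otimes> q \<in> I" using norm q i by simp
      have kc: "inv q \<otimes> i \<otimes> q \<in> carrier G" using ic qc by simp
      have "i <# (q <# C) = (i \<otimes> q) <# C" using Yc[OF CY] ic qc by (simp add: lcos_m_assoc)
      also have "i \<otimes> q = q \<otimes> (inv q \<otimes> i \<otimes> q)" using ic qc by (simp add: m_assoc)
      also have "(q \<otimes> (inv q \<otimes> i \<otimes> q)) <# C = q <# ((inv q \<otimes> i \<otimes> q) <# C)"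
        using Yc[OF CY] kc qc by (simp add: lcos_m_assoc)
      also have "(inv q \<otimes> i \<otimes> q) <# C = C" using Cf k by simp
      finally show "i <# (q <# C) = q <# C" .
    qed
    ultimately show "q <# C \<in> ?Z" unfolding fixset_def by simp
  next
    fix C assume "C \<in> ?Z"
    then show "one G <# C = C" using act_onD(2)[OF aY] unfolding fixset_def by simp
  next
    fix x y C assume "x \<in> Q" "y \<in> Q" "C \<in> ?Z"
    then show "monoid.mult G x y <# C = x <# (y <# C)" using act_onD(3)[OF aY] Q unfolding fixset_def by auto
  qed
  have fW: "finite W" using fin Wc finite_subset by metis
  have fZ: "finite ?Z" using fW unfolding fixset_def coset_space_def by simp
  have pg: "int p dvd int (card ?Z) - int (card (fixset ?act Q ?Z))"
    by (rule pgroup_fix_cong[OF p Q(1) cQ fZ aZ])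
  have Ic: "I \<subseteq> carrier G" and Qc: "Q \<subseteq> carrier G" using I Q by (simp_all add: subgroup.subset)
  have "fixset ?act Q ?Z = fixset ?act (I <#> Q) ?Y"
  proof (rule Set.set_eqI)
    fix C
    show "C \<in> fixset ?act Q ?Z \<longleftrightarrow> C \<in> fixset ?act (I <#> Q) ?Y"
    proof
      assume C: "C \<in> fixset ?act Q ?Z"
      then have CY: "C \<in> ?Y" and CI: "\<forall>i\<in>I. i <# C = C" and CQ: "\<forall>q\<in>Q. q <# C = C"
        unfolding fixset_def by auto
      have "\<forall>x\<in>I <#> Q. x <# C = C"
      proof
        fix x assume "x \<in> I <#> Q"
        then obtain i q where iq: "i \<in> I" "q \<in> Q" "x = i \<otimes> q" by (rule set_mult_elemE)
        have "i \<in> carrier G" "q \<in> carrier G" using iq Ic Qc by auto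
        then have "x <# C = i <# (q <# C)" using iq Yc[OF CY] by (simp add: lcos_m_assoc)
        then show "x <# C = C" using CI CQ iq by simp
      qed
      then show "C \<in> fixset ?act (I <#> Q) ?Y" using CY unfolding fixset_def by simp
    next
      assume C: "C \<in> fixset ?act (I <#> Q) ?Y"
      then have CY: "C \<in> ?Y" and CIQ: "\<forall>x\<in>I <#> Q. x <# C = C" unfolding fixset_def by auto
      have "\<forall>i\<in>I. i <# C = C" using CIQ setmult_sub_left[OF Q(1) Ic] by auto
      moreover have "\<forall>q\<in>Q. q <# C = C" using CIQ setmult_sub_right[OF I(1) Qc] by auto
      ultimately show "C \<in> fixset ?act Q ?Z" using CY unfolding fixset_def by simp
    qed
  qed
  then show ?thesis using pg unfolding fixed_cosets_fixset by simp
qed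

lemma cong_mark:
  assumes fin: "finite (carrier G)" and W: "subgroup W G"
    and I: "subgroup I G" "I \<subseteq> W" and Q: "subgroup Q G" "Q \<subseteq> W"
    and p: "Factorial_Ring.prime p" and cQ: "card Q = p ^ a"
    and norm: "\<And>q i. q \<in> Q \<Longrightarrow> i \<in> I \<Longrightarrow> inv q \<otimes> i \<otimes> q \<in> I"
  shows "int p dvd mark G W I c - mark G W (I <#> Q) c"
proof -
  have "mark G W I c - mark G W (I <#> Q) c = (\<Sum>J\<in>subgroups_of G W.
     c J * (int (fixed_cosets G W J I) - int (fixed_cosets G W J (I <#> Q))))"
    unfolding mark_def by (simp add: sum_subtractf right_diff_distrib)
  also have "int p dvd \<dots>"
  proof (rule dvd_sum)
    fix J assume "J \<in> subgroups_of G W"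
    then have "subgroup J G" "J \<subseteq> W" unfolding subgroups_of_def by auto
    then show "int p dvd c J * (int (fixed_cosets G W J I) - int (fixed_cosets G W J (I <#> Q)))"
      using cong_fixed[OF fin W _ _ I Q p cQ norm] by (simp add: dvd_mult)
  qed
  finally show ?thesis .
qed

lemma product_formula:
  assumes fin: "finite (carrier G)" and A: "subgroup A G" and B: "subgroup B G"
  shows "card (A <#> B) * card (A \<inter> B) = card A * card B"
proof -
  have Ac: "A \<subseteq> carrier G" and Bc: "B \<subseteq> carrier G" using A B by (simp_all add: subgroup.subset)
  have fA: "finite A" "finite B" using fin Ac Bc finite_subset by metis+
  let ?f = "\<lambda>(a, b). a \<otimes> b"
  have img: "?f ` (A \<times> B) = A <#> B" unfolding set_mult_def by auto
  have "card (A \<times> B) = card (?f ` (A \<times> B)) * card (A \<inter> B)"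
  proof (rule card_fibers)
    show "finite (A \<times> B)" using fA by simp
    fix x assume "x \<in> ?f ` (A \<times> B)"
    then obtain a0 b0 where ab0: "a0 \<in> A" "b0 \<in> B" "x = a0 \<otimes> b0" by auto
    have c0: "a0 \<in> carrier G" "b0 \<in> carrier G" using ab0 Ac Bc by auto
    let ?g = "\<lambda>t. (a0 \<otimes> t, inv t \<otimes> b0)"
    have "{ab \<in> A \<times> B. ?f ab = x} = ?g ` (A \<inter> B)"
    proof (rule Set.set_eqI)
      fix ab show "ab \<in> {ab \<in> A \<times> B. ?f ab = x} \<longleftrightarrow> ab \<in> ?g ` (A \<inter> B)"
      proof
        assume "ab \<in> {ab \<in> A \<times> B. ?f ab = x}"
        then obtain a b where ab: "ab = (a, b)" "a \<in> A" "b \<in> B" "a \<otimes> b = a0 \<otimes> b0" using ab0 by auto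
        have c: "a \<in> carrier G" "b \<in> carrier G" using ab Ac Bc by auto
        have "inv a0 \<otimes> a = inv a0 \<otimes> (a \<otimes> b) \<otimes> inv b" using c c0 by (simp add: m_assoc)
        also have "\<dots> = inv a0 \<otimes> (a0 \<otimes> b0) \<otimes> inv b" using ab by simp
        also have "\<dots> = b0 \<otimes> inv b" using c c0 by (simp add: m_assoc)
        finally have t: "inv a0 \<otimes> a = b0 \<otimes> inv b" .
        have tA: "inv a0 \<otimes> a \<in> A" using ab ab0 A by (simp add: subgroup.m_closed subgroup.m_inv_closed)
        have tB: "b0 \<otimes> inv b \<in> B" using ab ab0 B by (simp add: subgroup.m_closed subgroup.m_inv_closed)
        have e1: "a = a0 \<otimes> (inv a0 \<otimes> a)" using c c0 by simp
        have "inv (b0 \<otimes> inv b) \<otimes> b0 = b" using c c0 by (simp add: inv_mult_group m_assoc)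
        then have e2: "b = inv (inv a0 \<otimes> a) \<otimes> b0" using t by simp
        have "ab = ?g (inv a0 \<otimes> a)" using ab e1 e2 by simp
        moreover have "inv a0 \<otimes> a \<in> A \<inter> B" using tA tB t by simp
        ultimately show "ab \<in> ?g ` (A \<inter> B)" by (rule image_eqI)
      next
        assume "ab \<in> ?g ` (A \<inter> B)"
        then obtain t where t: "t \<in> A" "t \<in> B" "ab = ?g t" by auto
        have tc: "t \<in> carrier G" using t Ac by auto
        have "a0 \<otimes> t \<in> A" using t ab0 A by (simp add: subgroup.m_closed)
        moreover have "inv t \<otimes> b0 \<in> B" using t ab0 B by (simp add: subgroup.m_closed subgroup.m_inv_closed)
        moreover have "(a0 \<otimes> t) \<otimes> (inv t \<otimes> b0) = x" using ab0 tc c0 by (simp add: m_assoc)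
        ultimately show "ab \<in> {ab \<in> A \<times> B. ?f ab = x}" using t by simp
      qed
    qed
    moreover have "inj_on ?g (A \<inter> B)"
    proof (rule inj_onI)
      fix u v assume "u \<in> A \<inter> B" "v \<in> A \<inter> B" "?g u = ?g v"
      then have "u \<in> carrier G" "v \<in> carrier G" "a0 \<otimes> u = a0 \<otimes> v" using Ac by auto
      then show "u = v" using c0 by simp
    qed
    ultimately show "card {ab \<in> A \<times> B. ?f ab = x} = card (A \<inter> B)" by (simp add: card_image)
  qed
  then show ?thesis using img by (simp add: card_cartesian_product)
qed

lemma lagrange_dvd:
  assumes fin: "finite (carrier G)" and A: "subgroup A G" and B: "subgroup B G" and AB: "A \<subseteq> B"
  shows "card A dvd card B"
proof -
  interpret GB: group "G\<lparr>carrier := B\<rparr>" by (rule subgroup_imp_group[OF B])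
  have "subgroup A (G\<lparr>carrier := B\<rparr>)" by (rule subgroup_incl[OF A B AB])
  then have "card (rcosets\<^bsub>G\<lparr>carrier := B\<rparr>\<^esub> A) * card A = order (G\<lparr>carrier := B\<rparr>)"
    by (rule GB.lagrange)
  then have "card B = card (rcosets\<^bsub>G\<lparr>carrier := B\<rparr>\<^esub> A) * card A" by (simp add: order_def)
  then show ?thesis by (metis dvd_triv_right)
qed

lemma sylow_sub:
  assumes fin: "finite (carrier G)" and N: "subgroup N G" and p: "Factorial_Ring.prime p"
    and d: "p ^ a dvd card N"
  shows "\<exists>Q. subgroup Q G \<and> Q \<subseteq> N \<and> card Q = p ^ a"
proof -
  have grp: "group (G\<lparr>carrier := N\<rparr>)" by (rule subgroup_imp_group[OF N])
  obtain m where m: "card N = p ^ a * m" using d unfolding dvd_def by (elim exE)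
  have Nc: "N \<subseteq> carrier G" by (rule subgroup.subset[OF N])
  have fN: "finite N" by (rule finite_subset[OF Nc fin])
  have o: "order (G\<lparr>carrier := N\<rparr>) = p ^ a * m" using m by (simp add: order_def)
  have f: "finite (carrier (G\<lparr>carrier := N\<rparr>))" using fN by simp
  obtain Q where Q: "subgroup Q (G\<lparr>carrier := N\<rparr>)" "card Q = p ^ a"
    using sylow_thm[OF p grp o f] by (elim exE conjE)
  have "subgroup Q G" by (rule incl_subgroup[OF N Q(1)])
  moreover have "Q \<subseteq> N" using subgroup.subset[OF Q(1)] by simp
  ultimately show ?thesis using Q(2) by (intro exI[of _ Q]) simp
qed

end


lemma nt_index:
  fixes b m h p k :: nat
  assumes "0 < b" "b dvd m" "m dvd h" "h = p ^ k * b" "Factorial_Ring.prime p"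
  shows "\<exists>i. m = p ^ i * b"
proof -
  obtain t where t: "m = b * t" using assms(2) by (elim dvdE)
  obtain u where u: "h = m * u" using assms(3) by (elim dvdE)
  have "b * (t * u) = b * p ^ k" using t u assms(4) by (metis mult.assoc mult.commute)
  then have "t * u = p ^ k" using assms(1) by simp
  then have "t dvd p ^ k" by (metis dvd_triv_left)
  then obtain i where "t = p ^ i" using divides_primepow_nat[OF assms(5)] by auto
  then show ?thesis using t by (intro exI[of _ i]) (simp add: mult.commute)
qed

lemma nt_sylow:
  fixes n k oo m p :: nat
  assumes p: "Factorial_Ring.prime p" and n: "n = p ^ k * oo" and om: "oo dvd m"
    and pm: "p ^ multiplicity p n dvd m" and n0: "n > 0"
  shows "n dvd m"
proof -
  have "n \<noteq> 0" "\<not> is_unit p" using n0 p by (auto simp: prime_def)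
  then obtain u where u: "n = p ^ multiplicity p n * u" "\<not> p dvd u" using multiplicity_decompose' by metis
  have cop: "coprime u (p ^ k)" using prime_imp_coprime[OF p u(2)] by (simp add: coprime_commute)
  have "u dvd p ^ k * oo" using u n by (metis dvd_triv_right)
  then have "u dvd oo" using cop by (simp add: coprime_dvd_mult_right_iff)
  then have um: "u dvd m" using om by (rule dvd_trans)
  have cop2: "coprime (p ^ multiplicity p n) u" using prime_imp_coprime[OF p u(2)] by simp
  have "p ^ multiplicity p n * u dvd m" by (rule divides_mult[OF pm um cop2])
  then show ?thesis using u by simp
qed

definition npi :: "('a, 'b) monoid_scheme \<Rightarrow> nat \<Rightarrow> 'a set \<Rightarrow> 'a set \<Rightarrow> bool" where
  "npi G p H I \<longleftrightarrow> subgroup I G \<and> I \<subseteq> H \<and> (\<forall>h\<in>H. \<forall>i\<in>I. h \<otimes>\<^bsub>G\<^esub> i \<otimes>\<^bsub>G\<^esub> inv\<^bsub>G\<^esub> h \<in> I)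
     \<and> (\<exists>k. card H = p ^ k * card I)"

context group begin

lemma normal_sub_iff:
  assumes H: "subgroup H G"
  shows "I \<subseteq> H \<and> I \<lhd> (G\<lparr>carrier := H\<rparr>) \<longleftrightarrow> subgroup I G \<and> I \<subseteq> H \<and> (\<forall>h\<in>H. \<forall>i\<in>I. h \<otimes> i \<otimes> inv h \<in> I)"
proof -
  interpret GH: group "G\<lparr>carrier := H\<rparr>" by (rule subgroup_imp_group[OF H])
  have "I \<lhd> (G\<lparr>carrier := H\<rparr>) \<longleftrightarrow> subgroup I (G\<lparr>carrier := H\<rparr>) \<and>
     (\<forall>x\<in>carrier (G\<lparr>carrier := H\<rparr>). \<forall>h\<in>I. x \<otimes>\<^bsub>G\<lparr>carrier := H\<rparr>\<^esub> h \<otimes>\<^bsub>G\<lparr>carrier := H\<rparr>\<^esub> inv\<^bsub>G\<lparr>carrier := H\<rparr>\<^esub> x \<in> I)"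
    by (rule GH.normal_inv_iff)
  also have "\<dots> \<longleftrightarrow> subgroup I (G\<lparr>carrier := H\<rparr>) \<and> (\<forall>x\<in>H. \<forall>h\<in>I. x \<otimes> h \<otimes> inv x \<in> I)"
    using H by simp
  finally have e: "I \<lhd> (G\<lparr>carrier := H\<rparr>) \<longleftrightarrow> subgroup I (G\<lparr>carrier := H\<rparr>) \<and> (\<forall>x\<in>H. \<forall>h\<in>I. x \<otimes> h \<otimes> inv x \<in> I)" .
  have s: "I \<subseteq> H \<and> subgroup I (G\<lparr>carrier := H\<rparr>) \<longleftrightarrow> subgroup I G \<and> I \<subseteq> H"
  proof
    assume a: "I \<subseteq> H \<and> subgroup I (G\<lparr>carrier := H\<rparr>)"
    then show "subgroup I G \<and> I \<subseteq> H" using incl_subgroup[OF H] by simp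
  next
    assume a: "subgroup I G \<and> I \<subseteq> H"
    then show "I \<subseteq> H \<and> subgroup I (G\<lparr>carrier := H\<rparr>)" using subgroup_incl[OF _ H] by simp
  qed
  show ?thesis using e s by blast
qed

lemma Op_eq:
  assumes H: "subgroup H G"
  shows "Op G p H = \<Inter>{I. npi G p H I}"
proof -
  have "{I. I \<subseteq> H \<and> I \<lhd> (G\<lparr>carrier := H\<rparr>) \<and> (\<exists>k. card H = p ^ k * card I)} = {I. npi G p H I}"
    using normal_sub_iff[OF H] unfolding npi_def by blast
  then show ?thesis unfolding Op_def by simp
qed

lemma npi_self: "subgroup H G \<Longrightarrow> npi G p H H"
  unfolding npi_def by (auto intro!: exI[of _ 0] subgroup.m_closed subgroup.m_inv_closed)

lemma npi_index:
  assumes fin: "finite (carrier G)" and p: "Factorial_Ring.prime p" and H: "subgroup H G"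
    and A: "subgroup A G" "A \<subseteq> H" and B: "npi G p H B"
  shows "\<exists>i. card A = p ^ i * card (A \<inter> B)"
proof -
  have Bs: "subgroup B G" "B \<subseteq> H" and Bn: "\<And>h b. h \<in> H \<Longrightarrow> b \<in> B \<Longrightarrow> h \<otimes> b \<otimes> inv h \<in> B"
    and k: "\<exists>k. card H = p ^ k * card B" using B unfolding npi_def by auto
  have Hc: "H \<subseteq> carrier G" using H by (rule subgroup.subset)
  have norm: "\<And>a b. a \<in> A \<Longrightarrow> b \<in> B \<Longrightarrow> inv a \<otimes> b \<otimes> a \<in> B"
  proof -
    fix a b assume a: "a \<in> A" and b: "b \<in> B"
    have aH: "a \<in> H" using a A by auto
    have "inv a \<in> H" using aH H by (simp add: subgroup.m_inv_closed)
    then have "inv a \<otimes> b \<otimes> inv (inv a) \<in> B" using Bn b by simp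
    then show "inv a \<otimes> b \<otimes> a \<in> B" using aH Hc by auto
  qed
  have M: "subgroup (B <#> A) G" by (rule setmult_subgroup[OF Bs(1) A(1) norm])
  have BM: "B \<subseteq> B <#> A" using setmult_sub_left[OF A(1)] Bs Hc by auto
  have MH: "B <#> A \<subseteq> H" by (rule setmult_sub_subgroup[OF H Bs(2) A(2)])
  have d1: "card B dvd card (B <#> A)" by (rule lagrange_dvd[OF fin Bs(1) M BM])
  have d2: "card (B <#> A) dvd card H" by (rule lagrange_dvd[OF fin M H MH])
  have pf: "card (B <#> A) * card (B \<inter> A) = card B * card A" by (rule product_formula[OF fin Bs(1) A(1)])
  have fB: "finite B" using fin Bs Hc finite_subset by (metis subgroup.subset)
  have "card B > 0" using fB subgroup.one_closed[OF Bs(1)] by (auto simp: card_gt_0_iff)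
  then obtain i where i: "card (B <#> A) = p ^ i * card B" using nt_index[OF _ d1 d2 _ p] k by blast
  then have "card B * (p ^ i * card (B \<inter> A)) = card B * card A" using pf by (simp add: mult.commute mult.left_commute)
  then have "card A = p ^ i * card (B \<inter> A)" using \<open>card B > 0\<close> by simp
  then show ?thesis by (intro exI[of _ i]) (simp add: Int_commute)
qed

lemma npi_inter:
  assumes fin: "finite (carrier G)" and p: "Factorial_Ring.prime p" and H: "subgroup H G"
    and A: "npi G p H A" and B: "npi G p H B"
  shows "npi G p H (A \<inter> B)"
proof -
  have As: "subgroup A G" "A \<subseteq> H" using A unfolding npi_def by auto
  obtain i where i: "card A = p ^ i * card (A \<inter> B)" using npi_index[OF fin p H As B] by (elim exE)
  obtain k where k: "card H = p ^ k * card A" using A unfolding npi_def by auto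
  have "card H = p ^ (k + i) * card (A \<inter> B)" using i k by (simp add: power_add)
  moreover have "subgroup (A \<inter> B) G" using A B unfolding npi_def by (simp add: subgroups_Inter_pair)
  moreover have "\<forall>h\<in>H. \<forall>x\<in>A \<inter> B. h \<otimes> x \<otimes> inv h \<in> A \<inter> B" using A B unfolding npi_def by auto
  ultimately show ?thesis using As unfolding npi_def by auto
qed

lemma npi_Inter:
  assumes fin: "finite (carrier G)" and p: "Factorial_Ring.prime p" and H: "subgroup H G"
    and F: "finite F" "F \<noteq> {}" "\<And>M. M \<in> F \<Longrightarrow> npi G p H M"
  shows "npi G p H (\<Inter>F)"
  using F
proof (induction F rule: finite_ne_induct)
  case (singleton x)
  then show ?case by simp
next
  case (insert x F)
  then have "npi G p H (x \<inter> \<Inter>F)" by (intro npi_inter[OF fin p H]) auto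
  then show ?case by simp
qed

lemma Op_npi:
  assumes fin: "finite (carrier G)" and p: "Factorial_Ring.prime p" and H: "subgroup H G"
  shows "npi G p H (Op G p H)"
proof -
  have Hc: "H \<subseteq> carrier G" using H by (rule subgroup.subset)
  have "{I. npi G p H I} \<subseteq> Pow H" unfolding npi_def by auto
  then have f: "finite {I. npi G p H I}" using fin Hc by (meson finite_Pow_iff finite_subset)
  have ne: "{I. npi G p H I} \<noteq> {}" using npi_self[OF H] by auto
  show ?thesis unfolding Op_eq[OF H] by (rule npi_Inter[OF fin p H f ne]) simp
qed

lemma Op_le: "subgroup H G \<Longrightarrow> npi G p H M \<Longrightarrow> Op G p H \<subseteq> M"
  unfolding Op_eq by auto

lemma Op_subgroup:
  assumes "finite (carrier G)" "Factorial_Ring.prime p" "subgroup H G"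
  shows "subgroup (Op G p H) G" "Op G p H \<subseteq> H"
  using Op_npi[OF assms] unfolding npi_def by auto

lemma Op_mono:
  assumes fin: "finite (carrier G)" and p: "Factorial_Ring.prime p" and H: "subgroup H G"
    and I: "subgroup I G" "I \<subseteq> H"
  shows "Op G p I \<subseteq> Op G p H"
proof -
  let ?O = "Op G p H"
  have O: "npi G p H ?O" by (rule Op_npi[OF fin p H])
  obtain i where i: "card I = p ^ i * card (I \<inter> ?O)" using npi_index[OF fin p H I O] by blast
  have "npi G p I (I \<inter> ?O)"
    unfolding npi_def
  proof (intro conjI)
    show "subgroup (I \<inter> ?O) G" using I O unfolding npi_def by (simp add: subgroups_Inter_pair)
    show "I \<inter> ?O \<subseteq> I" by auto
    show "\<forall>h\<in>I. \<forall>x\<in>I \<inter> ?O. h \<otimes> x \<otimes> inv h \<in> I \<inter> ?O"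
      using I O unfolding npi_def by (auto simp: subgroup.m_closed subgroup.m_inv_closed)
    show "\<exists>k. card I = p ^ k * card (I \<inter> ?O)" using i by blast
  qed
  then have "Op G p I \<subseteq> I \<inter> ?O" by (rule Op_le[OF I(1)])
  then show ?thesis by auto
qed

end


context group begin

lemma npi_conj:
  assumes fin: "finite (carrier G)" and I: "subgroup I G" and g: "g \<in> carrier G"
    and M: "npi G p ((g <# I) #> inv g) M"
  shows "npi G p I ((inv g <# M) #> inv (inv g))"
proof -
  have Ic: "I \<subseteq> carrier G" using I by (rule subgroup.subset)
  have Ms: "subgroup M G" "M \<subseteq> (g <# I) #> inv g" using M unfolding npi_def by auto
  have Mc: "M \<subseteq> carrier G" using Ms(1) by (rule subgroup.subset)
  have Mn: "\<And>h m. h \<in> (g <# I) #> inv g \<Longrightarrow> m \<in> M \<Longrightarrow> h \<otimes> m \<otimes> inv h \<in> M" using M unfolding npi_def by auto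
  obtain k where k: "card ((g <# I) #> inv g) = p ^ k * card M" using M unfolding npi_def by auto
  have ig: "inv g \<in> carrier G" using g by simp
  show ?thesis unfolding npi_def
  proof (intro conjI)
    show "subgroup ((inv g <# M) #> inv (inv g)) G" by (rule conj_subgroup[OF Ms(1) ig])
    have "(inv g <# M) #> inv (inv g) \<subseteq> (inv g <# ((g <# I) #> inv g)) #> inv (inv g)"
      using Ms(2) by (rule conj_mono)
    also have "\<dots> = I" by (rule conj_inv_conj[OF Ic g])
    finally show "(inv g <# M) #> inv (inv g) \<subseteq> I" .
    show "\<forall>h\<in>I. \<forall>x\<in>(inv g <# M) #> inv (inv g). h \<otimes> x \<otimes> inv h \<in> (inv g <# M) #> inv (inv g)"
    proof (intro ballI)
      fix h x assume h: "h \<in> I" and x: "x \<in> (inv g <# M) #> inv (inv g)"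
      from x obtain m where m: "m \<in> M" "x = inv g \<otimes> m \<otimes> inv (inv g)" by (rule conj_elemE)
      have hc: "h \<in> carrier G" using h Ic by auto
      have mc: "m \<in> carrier G" using m Mc by auto
      have ghg: "g \<otimes> h \<otimes> inv g \<in> (g <# I) #> inv g" using h by (rule conj_elemI)
      have inM: "(g \<otimes> h \<otimes> inv g) \<otimes> m \<otimes> inv (g \<otimes> h \<otimes> inv g) \<in> M" using Mn[OF ghg m(1)] .
      have "h \<otimes> x \<otimes> inv h = inv g \<otimes> ((g \<otimes> h \<otimes> inv g) \<otimes> m \<otimes> inv (g \<otimes> h \<otimes> inv g)) \<otimes> inv (inv g)"
        using m hc mc g by (simp add: m_assoc inv_mult_group)
      then show "h \<otimes> x \<otimes> inv h \<in> (inv g <# M) #> inv (inv g)" using conj_elemI[OF inM] by simp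
    qed
    have "card ((inv g <# M) #> inv (inv g)) = card M" by (rule card_conj[OF Mc ig])
    moreover have "card ((g <# I) #> inv g) = card I" by (rule card_conj[OF Ic g])
    ultimately show "\<exists>k. card I = p ^ k * card ((inv g <# M) #> inv (inv g))" using k by (intro exI[of _ k]) simp
  qed
qed

lemma Op_conj:
  assumes fin: "finite (carrier G)" and I: "subgroup I G" and g: "g \<in> carrier G"
  shows "(g <# Op G p I) #> inv g \<subseteq> Op G p ((g <# I) #> inv g)"
proof -
  have Ic: "I \<subseteq> carrier G" using I by (rule subgroup.subset)
  have cI: "subgroup ((g <# I) #> inv g) G" by (rule conj_subgroup[OF I g])
  have "\<And>M. npi G p ((g <# I) #> inv g) M \<Longrightarrow> (g <# Op G p I) #> inv g \<subseteq> M"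
  proof -
    fix M assume M: "npi G p ((g <# I) #> inv g) M"
    have Mc: "M \<subseteq> carrier G" using M unfolding npi_def by (auto dest: subgroup.subset)
    have "Op G p I \<subseteq> (inv g <# M) #> inv (inv g)" by (rule Op_le[OF I npi_conj[OF fin I g M]])
    then have "(g <# Op G p I) #> inv g \<subseteq> (g <# ((inv g <# M) #> inv (inv g))) #> inv g"
      by (rule conj_mono)
    also have "\<dots> = M" using conj_inv_conj[OF Mc, of "inv g"] g by simp
    finally show "(g <# Op G p I) #> inv g \<subseteq> M" .
  qed
  then show ?thesis unfolding Op_eq[OF cI] by auto
qed

definition pperf :: "nat \<Rightarrow> 'a set \<Rightarrow> bool" where
  "pperf p P \<longleftrightarrow> (\<forall>N. npi G p P N \<longrightarrow> N = P)"

lemma Op_perfect: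
  assumes fin: "finite (carrier G)" and p: "Factorial_Ring.prime p" and H: "subgroup H G"
  shows "pperf p (Op G p H)"
  unfolding pperf_def
proof (intro allI impI)
  fix N assume N: "npi G p (Op G p H) N"
  let ?P = "Op G p H"
  have P: "npi G p H ?P" by (rule Op_npi[OF fin p H])
  have Ps: "subgroup ?P G" "?P \<subseteq> H" using P unfolding npi_def by auto
  have Pn: "\<And>h x. h \<in> H \<Longrightarrow> x \<in> ?P \<Longrightarrow> h \<otimes> x \<otimes> inv h \<in> ?P" using P unfolding npi_def by auto
  obtain kP where kP: "card H = p ^ kP * card ?P" using P unfolding npi_def by auto
  have Ns: "subgroup N G" "N \<subseteq> ?P" using N unfolding npi_def by auto
  have Nn: "\<And>h x. h \<in> ?P \<Longrightarrow> x \<in> N \<Longrightarrow> h \<otimes> x \<otimes> inv h \<in> N" using N unfolding npi_def by auto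
  obtain kN where kN: "card ?P = p ^ kN * card N" using N unfolding npi_def by auto
  have Hc: "H \<subseteq> carrier G" using H by (rule subgroup.subset)
  have Nc: "N \<subseteq> carrier G" using Ns(1) by (rule subgroup.subset)
  have Pc: "?P \<subseteq> carrier G" using Ps(1) by (rule subgroup.subset)
  let ?F = "(\<lambda>h. (h <# N) #> inv h) ` H"
  let ?C = "\<Inter>?F"
  have conjN: "\<And>h. h \<in> H \<Longrightarrow> npi G p ?P ((h <# N) #> inv h)"
  proof -
    fix h assume h: "h \<in> H"
    have hc: "h \<in> carrier G" using h Hc by auto
    show "npi G p ?P ((h <# N) #> inv h)" unfolding npi_def
    proof (intro conjI)
      show "subgroup ((h <# N) #> inv h) G" by (rule conj_subgroup[OF Ns(1) hc])
      show "(h <# N) #> inv h \<subseteq> ?P"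
      proof
        fix y assume "y \<in> (h <# N) #> inv h"
        then obtain n where n: "n \<in> N" "y = h \<otimes> n \<otimes> inv h" by (rule conj_elemE)
        then show "y \<in> ?P" using Pn[OF h] Ns(2) by auto
      qed
      show "\<forall>x\<in>?P. \<forall>y\<in>(h <# N) #> inv h. x \<otimes> y \<otimes> inv x \<in> (h <# N) #> inv h"
      proof (intro ballI)
        fix x y assume x: "x \<in> ?P" and y: "y \<in> (h <# N) #> inv h"
        from y obtain n where n: "n \<in> N" "y = h \<otimes> n \<otimes> inv h" by (rule conj_elemE)
        have xc: "x \<in> carrier G" using x Pc by auto
        have nc: "n \<in> carrier G" using n Nc by auto
        have ih: "inv h \<in> H" using h H by (simp add: subgroup.m_inv_closed)
        have "inv h \<otimes> x \<otimes> inv (inv h) \<in> ?P" using Pn[OF ih x] .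
        then have x': "inv h \<otimes> x \<otimes> h \<in> ?P" using hc by simp
        have inN: "(inv h \<otimes> x \<otimes> h) \<otimes> n \<otimes> inv (inv h \<otimes> x \<otimes> h) \<in> N" using Nn[OF x' n(1)] .
        have "x \<otimes> y \<otimes> inv x = h \<otimes> ((inv h \<otimes> x \<otimes> h) \<otimes> n \<otimes> inv (inv h \<otimes> x \<otimes> h)) \<otimes> inv h"
          using n hc xc nc by (simp add: m_assoc inv_mult_group)
        then show "x \<otimes> y \<otimes> inv x \<in> (h <# N) #> inv h" using conj_elemI[OF inN] by simp
      qed
      show "\<exists>k. card ?P = p ^ k * card ((h <# N) #> inv h)" using kN card_conj[OF Nc hc] by auto
    qed
  qed
  have fF: "finite ?F" using fin Hc finite_subset by (metis finite_imageI)
  have neF: "?F \<noteq> {}" using subgroup.one_closed[OF H] by auto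
  have Cp: "npi G p ?P ?C" by (rule npi_Inter[OF fin p Ps(1) fF neF]) (use conjN in auto)
  obtain kC where kC: "card ?P = p ^ kC * card ?C" using Cp unfolding npi_def by auto
  have CH: "npi G p H ?C" unfolding npi_def
  proof (intro conjI)
    show "subgroup ?C G" using Cp unfolding npi_def by simp
    show "?C \<subseteq> H" using Cp Ps unfolding npi_def by auto
    show "\<forall>y\<in>H. \<forall>c\<in>?C. y \<otimes> c \<otimes> inv y \<in> ?C"
    proof (intro ballI)
      fix y c assume y: "y \<in> H" and c: "c \<in> ?C"
      have yc: "y \<in> carrier G" using y Hc by auto
      show "y \<otimes> c \<otimes> inv y \<in> ?C"
      proof (rule InterI)
        fix S assume "S \<in> ?F"
        then obtain h where h: "h \<in> H" "S = (h <# N) #> inv h" by auto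
        have hc: "h \<in> carrier G" using h Hc by auto
        have yh: "inv y \<otimes> h \<in> H" using y h H by (simp add: subgroup.m_closed subgroup.m_inv_closed)
        have "c \<in> ((inv y \<otimes> h) <# N) #> inv (inv y \<otimes> h)" using c yh by auto
        then obtain n where n: "n \<in> N" "c = (inv y \<otimes> h) \<otimes> n \<otimes> inv (inv y \<otimes> h)" by (rule conj_elemE)
        have nc: "n \<in> carrier G" using n Nc by auto
        have "y \<otimes> c \<otimes> inv y = h \<otimes> n \<otimes> inv h" using n yc hc nc by (simp add: m_assoc inv_mult_group)
        then show "y \<otimes> c \<otimes> inv y \<in> S" using h conj_elemI[OF n(1)] by simp
      qed
    qed
    show "\<exists>k. card H = p ^ k * card ?C" using kP kC by (intro exI[of _ "kP + kC"]) (simp add: power_add)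
  qed
  have "?P \<subseteq> ?C" by (rule Op_le[OF H CH])
  also have "?C \<subseteq> (\<one> <# N) #> inv \<one>" using subgroup.one_closed[OF H] by auto
  also have "\<dots> = N" by (rule conj_one[OF Nc])
  finally show "N = ?P" using Ns(2) by auto
qed

lemma pperf_Op:
  assumes fin: "finite (carrier G)" and p: "Factorial_Ring.prime p" and P: "subgroup P G"
    and pp: "pperf p P"
  shows "Op G p P = P"
  using Op_npi[OF fin p P] pp unfolding pperf_def by blast

lemma cong_Op:
  assumes fin: "finite (carrier G)" and p: "Factorial_Ring.prime p" and W: "subgroup W G"
    and I: "subgroup I G" "I \<subseteq> W"
  shows "int p dvd mark G W I c - mark G W (Op G p I) c"
proof -
  let ?O = "Op G p I"
  have O: "npi G p I ?O" by (rule Op_npi[OF fin p I(1)])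
  have Os: "subgroup ?O G" "?O \<subseteq> I" using O unfolding npi_def by auto
  have On: "\<And>h x. h \<in> I \<Longrightarrow> x \<in> ?O \<Longrightarrow> h \<otimes> x \<otimes> inv h \<in> ?O" using O unfolding npi_def by auto
  obtain k where k: "card I = p ^ k * card ?O" using O unfolding npi_def by auto
  have Ic: "I \<subseteq> carrier G" using I(1) by (rule subgroup.subset)
  have fI: "finite I" using fin Ic finite_subset by metis
  have cI: "card I > 0" using fI subgroup.one_closed[OF I(1)] by (auto simp: card_gt_0_iff)
  have "p ^ multiplicity p (card I) dvd card I" by (rule multiplicity_dvd)
  then obtain S where S: "subgroup S G" "S \<subseteq> I" "card S = p ^ multiplicity p (card I)"
    using sylow_sub[OF fin I(1) p] by blast
  have norm: "\<And>s x. s \<in> S \<Longrightarrow> x \<in> ?O \<Longrightarrow> inv s \<otimes> x \<otimes> s \<in> ?O"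
  proof -
    fix s x assume s: "s \<in> S" and x: "x \<in> ?O"
    have sI: "s \<in> I" using s S by auto
    have "inv s \<in> I" using sI I by (simp add: subgroup.m_inv_closed)
    then have "inv s \<otimes> x \<otimes> inv (inv s) \<in> ?O" using On x by simp
    then show "inv s \<otimes> x \<otimes> s \<in> ?O" using sI Ic by auto
  qed
  have OS: "subgroup (?O <#> S) G" by (rule setmult_subgroup[OF Os(1) S(1) norm])
  have OSI: "?O <#> S \<subseteq> I" by (rule setmult_sub_subgroup[OF I(1) Os(2) S(2)])
  have Oc: "?O \<subseteq> carrier G" using Os Ic by auto
  have Sc: "S \<subseteq> carrier G" using S Ic by auto
  have d1: "card ?O dvd card (?O <#> S)" by (rule lagrange_dvd[OF fin Os(1) OS setmult_sub_left[OF S(1) Oc]])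
  have d2: "card S dvd card (?O <#> S)" by (rule lagrange_dvd[OF fin S(1) OS setmult_sub_right[OF Os(1) Sc]])
  have "card I dvd card (?O <#> S)" by (rule nt_sylow[OF p k d1 _ cI]) (use d2 S(3) in simp)
  moreover have "card (?O <#> S) \<le> card I" using OSI fI by (rule card_mono[rotated])
  moreover have "card (?O <#> S) > 0" using OS fI OSI finite_subset subgroup.one_closed by (metis card_gt_0_iff empty_iff)
  ultimately have "card (?O <#> S) = card I" by (simp add: dvd_imp_le le_antisym)
  then have eq: "?O <#> S = I" using OSI fI by (simp add: card_subset_eq)
  have "int p dvd mark G W ?O c - mark G W (?O <#> S) c"
    by (rule cong_mark[OF fin W Os(1) _ S(1) _ p S(3) norm]) (use Os S I in auto)
  then have "int p dvd mark G W ?O c - mark G W I c" using eq by simp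
  then show ?thesis by (simp add: dvd_diff_commute)
qed

end


context group begin

lemma fc_top:
  assumes W: "subgroup W G" and I: "I \<subseteq> W"
  shows "fixed_cosets G W W I = 1"
proof -
  have cs: "coset_space G W W = {W}"
  proof -
    have "\<And>h. h \<in> W \<Longrightarrow> h <# W = W" using lcos_subgroup_self[OF W] by simp
    moreover have "W \<noteq> {}" using subgroup.one_closed[OF W] by auto
    ultimately show ?thesis unfolding coset_space_def by auto
  qed
  have "\<And>i. i \<in> I \<Longrightarrow> i <# W = W" using lcos_subgroup_self[OF W] I by auto
  then have "{C \<in> coset_space G W W. \<forall>i\<in>I. i <# C = C} = {W}" using cs by auto
  then show ?thesis unfolding fixed_cosets_def by simp
qed

lemma fc_proper_zero:
  assumes fin: "finite (carrier G)" and W: "subgroup W G" and I: "subgroup I G" "I \<subseteq> W" "I \<noteq> W"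
  shows "fixed_cosets G W I W = 0"
proof -
  have Wc: "W \<subseteq> carrier G" using W by (rule subgroup.subset)
  have fW: "finite W" using fin Wc finite_subset by metis
  have Ic: "I \<subseteq> carrier G" using I Wc by auto
  have lt: "card I < card W" using I fW by (simp add: psubset_card_mono)
  have E: "{C \<in> coset_space G W I. \<forall>x\<in>W. x <# C = C} = {}"
  proof (rule ccontr)
    assume "{C \<in> coset_space G W I. \<forall>x\<in>W. x <# C = C} \<noteq> {}"
    then obtain C where C: "C \<in> coset_space G W I" "\<forall>x\<in>W. x <# C = C" by auto
    then obtain h where h: "h \<in> W" "C = h <# I" unfolding coset_space_elem by blast
    have hc: "h \<in> carrier G" using h Wc by auto
    have "h \<otimes> \<one> \<in> h <# I" unfolding lcos_elem using subgroup.one_closed[OF I(1)] by blast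
    then have hC: "h \<in> C" using h hc by simp
    have "(\<lambda>x. x \<otimes> h) ` W \<subseteq> C"
    proof
      fix y assume "y \<in> (\<lambda>x. x \<otimes> h) ` W"
      then obtain x where x: "x \<in> W" "y = x \<otimes> h" by auto
      have "x \<otimes> h \<in> x <# C" unfolding lcos_elem using hC by blast
      then show "y \<in> C" using C(2) x by simp
    qed
    moreover have "inj_on (\<lambda>x. x \<otimes> h) W"
    proof (rule inj_onI)
      fix x y assume "x \<in> W" "y \<in> W" "x \<otimes> h = y \<otimes> h"
      then show "x = y" using Wc hc by (metis right_cancel subsetD)
    qed
    moreover have "finite C" using h hc Ic fin by (metis finite_subset l_coset_subset_G)
    ultimately have "card W \<le> card C" by (metis card_image card_mono)
    moreover have "card C = card I" using h card_lcos[OF Ic hc] by simp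
    ultimately show False using lt by simp
  qed
  show ?thesis unfolding fixed_cosets_def E by (rule card.empty)
qed

lemma fc_self_pos:
  assumes fin: "finite (carrier G)" and W: "subgroup W G" and I: "subgroup I G" "I \<subseteq> W"
  shows "fixed_cosets G W I I > 0"
proof -
  have Wc: "W \<subseteq> carrier G" using W by (rule subgroup.subset)
  have fW: "finite W" using fin Wc finite_subset by metis
  have Ic: "I \<subseteq> carrier G" using I Wc by auto
  have "\<one> <# I = I" using lcos_mult_one[OF Ic] .
  then have "I \<in> coset_space G W I" unfolding coset_space_elem using subgroup.one_closed[OF W] by metis
  moreover have "\<forall>i\<in>I. i <# I = I" using lcos_subgroup_self[OF I(1)] by simp
  ultimately have "I \<in> {C \<in> coset_space G W I. \<forall>i\<in>I. i <# C = C}" by simp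
  moreover have "finite (coset_space G W I)" using fW unfolding coset_space_def by simp
  ultimately show ?thesis unfolding fixed_cosets_def by (metis (no_types, lifting) card_gt_0_iff empty_iff finite_subset mem_Collect_eq subsetI)
qed

lemma sep0:
  assumes fin: "finite (carrier G)" and W: "subgroup W G" and I: "I \<in> subgroups_of G W" "I \<noteq> W"
  shows "\<exists>c. mark G W I c = 0 \<and> mark G W W c = int (fixed_cosets G W I I) \<and> fixed_cosets G W I I > 0"
proof -
  have Is: "subgroup I G" "I \<subseteq> W" using I unfolding subgroups_of_def by auto
  have Ws: "W \<in> subgroups_of G W" using W unfolding subgroups_of_def by auto
  have fs: "finite (subgroups_of G W)" by (rule finite_subgroups_of[OF fin])
  let ?d = "int (fixed_cosets G W I I)"
  let ?c = "\<lambda>K. ?d * (if K = W then 1 else 0) + (- 1) * (if K = I then 1 else 0)"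
  have m: "\<And>J. mark G W J ?c = ?d * int (fixed_cosets G W W J) - int (fixed_cosets G W I J)"
  proof -
    fix J
    have "mark G W J ?c = mark G W J (\<lambda>K. ?d * (if K = W then 1 else 0)) + mark G W J (\<lambda>K. (- 1) * (if K = I then 1 else 0))"
      by (rule mark_add)
    also have "\<dots> = ?d * mark G W J (\<lambda>K. if K = W then 1 else 0) + (- 1) * mark G W J (\<lambda>K. if K = I then 1 else 0)"
      by (simp only: mark_smult)
    also have "\<dots> = ?d * int (fixed_cosets G W W J) - int (fixed_cosets G W I J)"
      by (simp add: mark_delta[OF fs Ws] mark_delta[OF fs I(1)])
    finally show "mark G W J ?c = ?d * int (fixed_cosets G W W J) - int (fixed_cosets G W I J)" .
  qed
  have "mark G W I ?c = 0" using m fc_top[OF W Is(2)] by simp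
  moreover have "mark G W W ?c = ?d" using m fc_top[OF W] fc_proper_zero[OF fin W Is I(2)] by simp
  ultimately show ?thesis using fc_self_pos[OF fin W Is] by blast
qed

end


lemma nt_pf:
  fixes x y p a b :: nat
  assumes p: "Factorial_Ring.prime p" and e: "x * p ^ b = y * p ^ a" and ba: "b \<le> a"
  shows "x = p ^ (a - b) * y"
proof -
  have "p ^ a = p ^ b * p ^ (a - b)" using ba by (simp add: power_add[symmetric])
  then have "p ^ b * x = p ^ b * (p ^ (a - b) * y)" using e by (simp add: mult_ac)
  moreover have "p ^ b > 0" using p by (simp add: prime_gt_0_nat)
  ultimately show ?thesis by (metis mult_left_cancel not_gr0)
qed

lemma nt_QI:
  fixes N I d p :: nat
  assumes p: "Factorial_Ring.prime p" and cN: "N = d * I" and pd: "p dvd d"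
   and cN0: "N > 0" and QI: "p ^ multiplicity p N dvd I"
  shows False
proof -
  define a where "a = multiplicity p N"
  from QI obtain s where s: "I = p ^ a * s" unfolding a_def by (rule dvdE)
  obtain d' where d': "d = p * d'" using pd by (rule dvdE)
  have "N \<noteq> 0" "\<not> is_unit p" using cN0 p by (auto simp: prime_def)
  then obtain u where u: "N = p ^ a * u" "\<not> p dvd u" unfolding a_def using multiplicity_decompose' by metis
  have "N = (p * d') * (p ^ a * s)" using cN d' s by simp
  also have "\<dots> = p ^ a * (p * d' * s)" by (simp only: mult_ac)
  finally have "p ^ a * u = p ^ a * (p * d' * s)" using u(1) by simp
  moreover have "p ^ a > 0" using p by (simp add: prime_gt_0_nat)
  ultimately have "u = p * d' * s" by (metis mult_left_cancel not_gr0)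
  then show False using u(2) by simp
qed

context group begin

lemma normalizer_fix:
  assumes I: "subgroup I G" and h: "h \<in> carrier G" and i: "i \<in> carrier G"
  shows "i <# (h <# I) = h <# I \<longleftrightarrow> inv h \<otimes> i \<otimes> h \<in> I"
proof -
  have Ic: "I \<subseteq> carrier G" using I by (rule subgroup.subset)
  have "i <# (h <# I) = (i \<otimes> h) <# I" using Ic h i by (simp add: lcos_m_assoc)
  then have "i <# (h <# I) = h <# I \<longleftrightarrow> h <# I = (i \<otimes> h) <# I" by auto
  also have "\<dots> \<longleftrightarrow> inv h \<otimes> (i \<otimes> h) \<in> I" using lcos_eq_iff[OF I h] h i by simp
  finally show ?thesis using h i by (simp add: m_assoc)
qed

lemma normalizer_subgroup:
  assumes fin: "finite (carrier G)" and P: "subgroup P G" and I: "subgroup I G"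
  shows "subgroup {h\<in>P. \<forall>i\<in>I. inv h \<otimes> i \<otimes> h \<in> I} G"
proof (rule subgroupI)
  have Pc: "P \<subseteq> carrier G" using P by (rule subgroup.subset)
  have Ic: "I \<subseteq> carrier G" using I by (rule subgroup.subset)
  show "{h\<in>P. \<forall>i\<in>I. inv h \<otimes> i \<otimes> h \<in> I} \<subseteq> carrier G" using Pc by auto
  have "\<forall>i\<in>I. inv \<one> \<otimes> i \<otimes> \<one> \<in> I"
  proof
    fix i assume "i \<in> I"
    moreover then have "i \<in> carrier G" using Ic by auto
    ultimately show "inv \<one> \<otimes> i \<otimes> \<one> \<in> I" by simp
  qed
  then have "\<one> \<in> {h\<in>P. \<forall>i\<in>I. inv h \<otimes> i \<otimes> h \<in> I}" using subgroup.one_closed[OF P] by simp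
  then show "{h\<in>P. \<forall>i\<in>I. inv h \<otimes> i \<otimes> h \<in> I} \<noteq> {}" by auto
next
  have Pc: "P \<subseteq> carrier G" using P by (rule subgroup.subset)
  have Ic: "I \<subseteq> carrier G" using I by (rule subgroup.subset)
  have fI: "finite I" using fin Ic finite_subset by metis
  fix a assume a: "a \<in> {h\<in>P. \<forall>i\<in>I. inv h \<otimes> i \<otimes> h \<in> I}"
  have ac: "a \<in> carrier G" using a Pc by auto
  let ?f = "\<lambda>j. inv a \<otimes> j \<otimes> a"
  have "?f ` I \<subseteq> I" using a by auto
  moreover have "inj_on ?f I"
  proof (rule inj_onI)
    fix x y assume xy: "x \<in> I" "y \<in> I" "?f x = ?f y"
    have "x \<in> carrier G" "y \<in> carrier G" using xy Ic by auto
    then show "x = y" using xy(3) ac by simp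
  qed
  ultimately have surj: "?f ` I = I" using fI by (simp add: endo_inj_surj)
  have "\<forall>i\<in>I. inv (inv a) \<otimes> i \<otimes> inv a \<in> I"
  proof
    fix i assume i: "i \<in> I"
    then have "i \<in> ?f ` I" using surj by simp
    then obtain j where j: "j \<in> I" "i = inv a \<otimes> j \<otimes> a" by (rule imageE) simp
    have jc: "j \<in> carrier G" using j Ic by auto
    have "inv (inv a) \<otimes> i \<otimes> inv a = j" using j ac jc by (simp add: m_assoc)
    then show "inv (inv a) \<otimes> i \<otimes> inv a \<in> I" using j by simp
  qed
  moreover have "inv a \<in> P" using a P by (simp add: subgroup.m_inv_closed)
  ultimately show "inv a \<in> {h\<in>P. \<forall>i\<in>I. inv h \<otimes> i \<otimes> h \<in> I}" by simp
next
  have Pc: "P \<subseteq> carrier G" using P by (rule subgroup.subset)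
  have Ic: "I \<subseteq> carrier G" using I by (rule subgroup.subset)
  fix a b assume a: "a \<in> {h\<in>P. \<forall>i\<in>I. inv h \<otimes> i \<otimes> h \<in> I}" and b: "b \<in> {h\<in>P. \<forall>i\<in>I. inv h \<otimes> i \<otimes> h \<in> I}"
  have c: "a \<in> carrier G" "b \<in> carrier G" using a b Pc by auto
  have "\<forall>i\<in>I. inv (a \<otimes> b) \<otimes> i \<otimes> (a \<otimes> b) \<in> I"
  proof
    fix i assume i: "i \<in> I"
    have ic: "i \<in> carrier G" using i Ic by auto
    have "inv a \<otimes> i \<otimes> a \<in> I" using a i by simp
    then have "inv b \<otimes> (inv a \<otimes> i \<otimes> a) \<otimes> b \<in> I" using b by simp
    moreover have "inv (a \<otimes> b) \<otimes> i \<otimes> (a \<otimes> b) = inv b \<otimes> (inv a \<otimes> i \<otimes> a) \<otimes> b"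
      using c ic by (simp add: m_assoc inv_mult_group)
    ultimately show "inv (a \<otimes> b) \<otimes> i \<otimes> (a \<otimes> b) \<in> I" by simp
  qed
  moreover have "a \<otimes> b \<in> P" using a b P by (simp add: subgroup.m_closed)
  ultimately show "a \<otimes> b \<in> {h\<in>P. \<forall>i\<in>I. inv h \<otimes> i \<otimes> h \<in> I}" by simp
qed

lemma card_normalizer:
  assumes fin: "finite (carrier G)" and P: "subgroup P G" and I: "subgroup I G" "I \<subseteq> P"
  shows "card {h\<in>P. \<forall>i\<in>I. inv h \<otimes> i \<otimes> h \<in> I} = fixed_cosets G P I I * card I"
proof -
  let ?N = "{h\<in>P. \<forall>i\<in>I. inv h \<otimes> i \<otimes> h \<in> I}"
  have Pc: "P \<subseteq> carrier G" using P by (rule subgroup.subset)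
  have Ic: "I \<subseteq> carrier G" using I(1) by (rule subgroup.subset)
  have fP: "finite P" using fin Pc finite_subset by metis
  have Nchar: "\<And>h. h \<in> P \<Longrightarrow> (\<forall>i\<in>I. i <# (h <# I) = h <# I) \<longleftrightarrow> (\<forall>i\<in>I. inv h \<otimes> i \<otimes> h \<in> I)"
    using normalizer_fix[OF I(1)] Pc Ic by blast
  have fc: "fixed_cosets G P I I = card ((\<lambda>h. h <# I) ` ?N)"
  proof -
    have "{C \<in> coset_space G P I. \<forall>i\<in>I. i <# C = C} = (\<lambda>h. h <# I) ` {h\<in>P. \<forall>i\<in>I. i <# (h <# I) = h <# I}"
      unfolding coset_space_def by auto
    also have "{h\<in>P. \<forall>i\<in>I. i <# (h <# I) = h <# I} = ?N" using Nchar by auto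
    finally show ?thesis unfolding fixed_cosets_def by simp
  qed
  have "card ?N = card ((\<lambda>h. h <# I) ` ?N) * card I"
  proof (rule card_fibers)
    show "finite ?N" using fP by simp
    fix b assume "b \<in> (\<lambda>h. h <# I) ` ?N"
    then obtain h where h: "h \<in> ?N" "b = h <# I" by auto
    have hc: "h \<in> carrier G" using h Pc by auto
    have "{a \<in> ?N. a <# I = b} = h <# I"
    proof (rule Set.set_eqI)
      fix a show "a \<in> {a \<in> ?N. a <# I = b} \<longleftrightarrow> a \<in> h <# I"
      proof
        assume a: "a \<in> {a \<in> ?N. a <# I = b}"
        have ac: "a \<in> carrier G" using a Pc by auto
        have "inv h \<otimes> a \<in> I" using a h lcos_eq_iff[OF I(1) hc ac] by simp
        moreover have "a = h \<otimes> (inv h \<otimes> a)" using hc ac by simp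
        ultimately show "a \<in> h <# I" unfolding lcos_elem by blast
      next
        assume "a \<in> h <# I"
        then obtain s where s: "s \<in> I" "a = h \<otimes> s" unfolding lcos_elem by blast
        have sc: "s \<in> carrier G" using s Ic by auto
        have ac: "a \<in> carrier G" using s hc sc by simp
        have eq: "a <# I = h <# I" using lcos_eq_iff[OF I(1) hc ac] s hc sc by simp
        have aP: "a \<in> P" using s h I(2) P by (auto simp: subgroup.m_closed)
        have "\<forall>i\<in>I. i <# (h <# I) = h <# I" using Nchar h by auto
        then have "\<forall>i\<in>I. i <# (a <# I) = a <# I" using eq by simp
        then have "a \<in> ?N" using Nchar[OF aP] aP by simp
        then show "a \<in> {a \<in> ?N. a <# I = b}" using eq h by simp
      qed
    qed
    then show "card {a \<in> ?N. a <# I = b} = card I" using card_lcos[OF Ic hc] by simp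
  qed
  then show ?thesis using fc by simp
qed

lemma sepp_aux:
  assumes fin: "finite (carrier G)" and p: "Factorial_Ring.prime p" and P: "subgroup P G"
    and pp: "pperf p P"
  shows "\<forall>I. card P - card I = n \<longrightarrow> I \<in> subgroups_of G P \<longrightarrow> I \<noteq> P \<longrightarrow>
           (\<exists>c. int p dvd mark G P I c \<and> \<not> int p dvd mark G P P c)"
proof (induction n rule: less_induct)
  case (less n)
  show ?case
  proof (intro allI impI)
    fix I assume n: "card P - card I = n" and Isub: "I \<in> subgroups_of G P" and IP: "I \<noteq> P"
    have Is: "subgroup I G" "I \<subseteq> P" using Isub unfolding subgroups_of_def by auto
    have Pc: "P \<subseteq> carrier G" using P by (rule subgroup.subset)
    have Ic: "I \<subseteq> carrier G" using Is Pc by auto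
    have fP: "finite P" using fin Pc finite_subset by metis
    have fI: "finite I" using fP Is finite_subset by metis
    let ?d = "fixed_cosets G P I I"
    show "\<exists>c. int p dvd mark G P I c \<and> \<not> int p dvd mark G P P c"
    proof (cases "p dvd ?d")
      case False
      obtain c where c: "mark G P I c = 0" "mark G P P c = int ?d" using sep0[OF fin P Isub IP] by blast
      have "\<not> int p dvd int ?d" using False by simp
      then show ?thesis using c by (intro exI[of _ c]) simp
    next
      case True
      let ?N = "{h\<in>P. \<forall>i\<in>I. inv h \<otimes> i \<otimes> h \<in> I}"
      have N: "subgroup ?N G" by (rule normalizer_subgroup[OF fin P Is(1)])
      have cN: "card ?N = ?d * card I" by (rule card_normalizer[OF fin P Is])
      have Nc: "?N \<subseteq> carrier G" using Pc by auto
      have fN: "finite ?N" using fP by simp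
      have cN0: "card ?N > 0" using fN subgroup.one_closed[OF N] by (auto simp: card_gt_0_iff)
      define a where "a = multiplicity p (card ?N)"
      have "p ^ a dvd card ?N" unfolding a_def by (rule multiplicity_dvd)
      then obtain Q where Q: "subgroup Q G" "Q \<subseteq> ?N" "card Q = p ^ a"
        using sylow_sub[OF fin N p] by blast
      have QI: "\<not> Q \<subseteq> I"
      proof
        assume "Q \<subseteq> I"
        then have "card Q dvd card I" by (rule lagrange_dvd[OF fin Q(1) Is(1)])
        then have "p ^ multiplicity p (card ?N) dvd card I" using Q(3) a_def by simp
        then show False using nt_QI[OF p cN True cN0] by blast
      qed
      have norm: "\<And>q i. q \<in> Q \<Longrightarrow> i \<in> I \<Longrightarrow> inv q \<otimes> i \<otimes> q \<in> I" using Q(2) by auto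
      let ?I' = "I <#> Q"
      have I's: "subgroup ?I' G" by (rule setmult_subgroup[OF Is(1) Q(1) norm])
      have QP: "Q \<subseteq> P" using Q(2) by auto
      have I'P: "?I' \<subseteq> P" by (rule setmult_sub_subgroup[OF P Is(2) QP])
      have II': "I \<subseteq> ?I'" by (rule setmult_sub_left[OF Q(1) Ic])
      have Qc: "Q \<subseteq> carrier G" using QP Pc by auto
      have QI': "Q \<subseteq> ?I'" by (rule setmult_sub_right[OF Is(1) Qc])
      have neq: "?I' \<noteq> I" using QI QI' by auto
      have fI': "finite ?I'" using fP I'P finite_subset by metis
      have lt1: "card I < card ?I'" using II' neq fI' by (simp add: psubset_card_mono)
      have le2: "card ?I' \<le> card P" using I'P fP by (rule card_mono[rotated])
      have I'ne: "?I' \<noteq> P"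
      proof
        assume eqP: "?I' = P"
        have "npi G p P I" unfolding npi_def
        proof (intro conjI)
          show "subgroup I G" by (rule Is(1))
          show "I \<subseteq> P" by (rule Is(2))
          show "\<forall>h\<in>P. \<forall>i\<in>I. h \<otimes> i \<otimes> inv h \<in> I"
          proof (intro ballI)
            fix h i assume h: "h \<in> P" and i: "i \<in> I"
            then have "h \<in> ?I'" using eqP by simp
            then obtain i0 q where iq: "i0 \<in> I" "q \<in> Q" "h = i0 \<otimes> q" by (rule set_mult_elemE)
            have c: "i0 \<in> carrier G" "q \<in> carrier G" "i \<in> carrier G" using iq i Ic Qc by auto
            have iqQ: "inv q \<in> Q" using iq Q(1) by (simp add: subgroup.m_inv_closed)
            have "inv (inv q) \<otimes> i \<otimes> inv q \<in> I" using norm[OF iqQ i] .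
            then have k: "q \<otimes> i \<otimes> inv q \<in> I" using c by simp
            have "h \<otimes> i \<otimes> inv h = i0 \<otimes> (q \<otimes> i \<otimes> inv q) \<otimes> inv i0"
              using iq c by (simp add: m_assoc inv_mult_group)
            moreover have "i0 \<otimes> (q \<otimes> i \<otimes> inv q) \<otimes> inv i0 \<in> I"
              using iq k Is(1) by (simp add: subgroup.m_closed subgroup.m_inv_closed)
            ultimately show "h \<otimes> i \<otimes> inv h \<in> I" by simp
          qed
          show "\<exists>k. card P = p ^ k * card I"
          proof -
            have pf: "card ?I' * card (I \<inter> Q) = card I * card Q" by (rule product_formula[OF fin Is(1) Q(1)])
            have "card (I \<inter> Q) dvd card Q"
              by (rule lagrange_dvd[OF fin subgroups_Inter_pair[OF Is(1) Q(1)] Q(1)]) auto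
            then obtain b where b: "b \<le> a" "card (I \<inter> Q) = p ^ b" using Q(3) divides_primepow_nat[OF p] by auto
            have "card P * p ^ b = card I * p ^ a" using pf b(2) Q(3) eqP by simp
            then have "card P = p ^ (a - b) * card I" by (rule nt_pf[OF p _ b(1)])
            then show ?thesis by blast
          qed
        qed
        then have "I = P" using pp unfolding pperf_def by blast
        then show False using IP by simp
      qed
      have lt: "card P - card ?I' < n" using n lt1 le2 by simp
      have I'sub: "?I' \<in> subgroups_of G P" using I's I'P unfolding subgroups_of_def by simp
      obtain c where c: "int p dvd mark G P ?I' c" "\<not> int p dvd mark G P P c"
        using less[OF lt] I'sub I'ne by blast
      have "int p dvd mark G P I c - mark G P ?I' c"
        by (rule cong_mark[OF fin P Is Q(1) QP p Q(3) norm])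
      then have "int p dvd (mark G P I c - mark G P ?I' c) + mark G P ?I' c" using c(1) by (rule dvd_add)
      then have "int p dvd mark G P I c" by simp
      then show ?thesis using c(2) by blast
    qed
  qed
qed

lemma sepp:
  assumes fin: "finite (carrier G)" and p: "Factorial_Ring.prime p" and P: "subgroup P G"
    and pp: "pperf p P" and I: "I \<in> subgroups_of G P" "I \<noteq> P"
  shows "\<exists>c. mark G P I c = 0 \<and> \<not> int p dvd mark G P P c"
proof -
  obtain y where y: "int p dvd mark G P I y" "\<not> int p dvd mark G P P y"
    using sepp_aux[OF fin p P pp] I by blast
  have Ps: "P \<in> subgroups_of G P" using P unfolding subgroups_of_def by auto
  have fs: "finite (subgroups_of G P)" by (rule finite_subgroups_of[OF fin])
  have Is: "I \<subseteq> P" using I unfolding subgroups_of_def by auto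
  let ?m = "mark G P I y"
  let ?x = "\<lambda>K. y K + (- ?m) * (if K = P then 1 else 0)"
  have mx: "\<And>J. J \<subseteq> P \<Longrightarrow> mark G P J ?x = mark G P J y - ?m"
  proof -
    fix J assume J: "J \<subseteq> P"
    have "mark G P J ?x = mark G P J y + mark G P J (\<lambda>K. (- ?m) * (if K = P then 1 else 0))"
      by (rule mark_add)
    also have "\<dots> = mark G P J y + (- ?m) * mark G P J (\<lambda>K. if K = P then 1 else 0)"
      by (simp only: mark_smult)
    also have "\<dots> = mark G P J y - ?m" using mark_delta[OF fs Ps] fc_top[OF P J] by simp
    finally show "mark G P J ?x = mark G P J y - ?m" .
  qed
  have "mark G P I ?x = 0" using mx[OF Is] by simp
  moreover have "\<not> int p dvd mark G P P ?x"
  proof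
    assume "int p dvd mark G P P ?x"
    then have "int p dvd mark G P P y - ?m" using mx by simp
    then have "int p dvd (mark G P P y - ?m) + ?m" using y(1) by (rule dvd_add)
    then have "int p dvd mark G P P y" by simp
    then show False using y(2) by simp
  qed
  ultimately show ?thesis by blast
qed

end


context group begin

lemma not_dvd_one_r: "r = 0 \<or> Factorial_Ring.prime r \<Longrightarrow> \<not> int r dvd 1"
proof
  assume r: "r = 0 \<or> Factorial_Ring.prime r" and d: "int r dvd 1"
  have "r dvd 1" using d by (metis int_dvd_int_iff of_nat_1)
  then have "r = 1" by simp
  then show False using r by simp
qed

lemma not_dvd_mult_r:
  assumes r: "r = 0 \<or> Factorial_Ring.prime r" and a: "\<not> int r dvd a" and b: "\<not> int r dvd b"
  shows "\<not> int r dvd a * b"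
  using r
proof
  assume "r = 0" then show ?thesis using a b by simp
next
  assume "Factorial_Ring.prime r"
  then have "Factorial_Ring.prime (int r)" by simp
  then show ?thesis using a b by (simp add: prime_dvd_mult_iff)
qed

lemma prime_avoid:
  assumes fin: "finite (carrier G)" and W: "subgroup W G" and fS: "finite S"
    and Ssub: "S \<subseteq> subgroups_of G W" and T: "T \<in> subgroups_of G W"
    and r: "r = 0 \<or> Factorial_Ring.prime r"
    and sep: "\<And>I. I \<in> S \<Longrightarrow> \<exists>x. mark G W I x = 0 \<and> \<not> int r dvd mark G W T x"
  shows "\<exists>c. (\<forall>I\<in>S. mark G W I c = 0) \<and> \<not> int r dvd mark G W T c"
  using fS Ssub sep
proof (induction S rule: finite_induct)
  case empty
  have Ws: "W \<in> subgroups_of G W" using W unfolding subgroups_of_def by auto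
  have fs: "finite (subgroups_of G W)" by (rule finite_subgroups_of[OF fin])
  have TW: "T \<subseteq> W" using T unfolding subgroups_of_def by auto
  have "mark G W T (\<lambda>K. if K = W then 1 else 0) = 1"
    using mark_delta[OF fs Ws] fc_top[OF W TW] by simp
  then show ?case using not_dvd_one_r[OF r] by (intro exI[of _ "\<lambda>K. if K = W then 1 else 0"]) simp
next
  case (insert I S)
  obtain c where c: "\<forall>J\<in>S. mark G W J c = 0" "\<not> int r dvd mark G W T c" using insert by auto
  obtain x where x: "mark G W I x = 0" "\<not> int r dvd mark G W T x" using insert(5) by blast
  have r1: "realizable G W (\<lambda>J. mark G W J c)" unfolding realizable_def by blast
  have r2: "realizable G W (\<lambda>J. mark G W J x)" unfolding realizable_def by blast
  obtain e where e: "\<forall>J\<in>subgroups_of G W. mark G W J e = mark G W J c * mark G W J x"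
    using realizable_mult[OF W fin r1 r2] unfolding realizable_def by blast
  have "\<forall>J\<in>insert I S. mark G W J e = 0" using e c x insert(4) by auto
  moreover have "\<not> int r dvd mark G W T e" using e T not_dvd_mult_r[OF r c(2) x(2)] by simp
  ultimately show ?case by blast
qed

lemma key0:
  assumes fin: "finite (carrier G)" and H: "subgroup H G" and nK: "\<not> subconj G H K"
  shows "\<exists>c. (\<forall>I\<in>subgroups_of G H. subconj G I K \<longrightarrow> mark G H I c = 0) \<and> mark G H H c \<noteq> 0"
proof -
  let ?S = "{I\<in>subgroups_of G H. subconj G I K}"
  have fS: "finite ?S" using finite_subgroups_of[OF fin] by simp
  have T: "H \<in> subgroups_of G H" using H unfolding subgroups_of_def by auto
  have "\<exists>c. (\<forall>I\<in>?S. mark G H I c = 0) \<and> \<not> int 0 dvd mark G H H c"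
  proof (rule prime_avoid[OF fin H fS _ T])
    fix I assume I: "I \<in> ?S"
    then have IH: "I \<noteq> H" using nK by auto
    obtain x where x: "mark G H I x = 0" "mark G H H x = int (fixed_cosets G H I I)" "fixed_cosets G H I I > 0"
      using sep0[OF fin H _ IH] I by blast
    then show "\<exists>x. mark G H I x = 0 \<and> \<not> int 0 dvd mark G H H x" by (intro exI[of _ x]) simp
  qed auto
  then show ?thesis by auto
qed

lemma keyp:
  assumes fin: "finite (carrier G)" and p: "Factorial_Ring.prime p" and H: "subgroup H G"
    and nK: "\<not> subconj G (Op G p H) K"
  shows "\<exists>c. (\<forall>I\<in>subgroups_of G (Op G p H). subconj G I K \<longrightarrow> mark G (Op G p H) I c = 0)
     \<and> \<not> int p dvd mark G (Op G p H) (Op G p H) c"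
proof -
  let ?P = "Op G p H"
  have P: "subgroup ?P G" using Op_subgroup[OF fin p H] by simp
  have pp: "pperf p ?P" by (rule Op_perfect[OF fin p H])
  let ?S = "{I\<in>subgroups_of G ?P. subconj G I K}"
  have fS: "finite ?S" using finite_subgroups_of[OF fin] by simp
  have T: "?P \<in> subgroups_of G ?P" using P unfolding subgroups_of_def by auto
  have "\<exists>c. (\<forall>I\<in>?S. mark G ?P I c = 0) \<and> \<not> int p dvd mark G ?P ?P c"
  proof (rule prime_avoid[OF fin P fS _ T])
    fix I assume I: "I \<in> ?S"
    then have IP: "I \<noteq> ?P" using nK by auto
    show "\<exists>x. mark G ?P I x = 0 \<and> \<not> int p dvd mark G ?P ?P x"
      using sepp[OF fin p P pp _ IP] I by blast
  qed (use p in auto)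
  then show ?thesis by auto
qed

lemma Op_subconj:
  assumes fin: "finite (carrier G)" and p: "Factorial_Ring.prime p" and H: "subgroup H G"
    and I: "subgroup I G" and IH: "subconj G I H"
  shows "subconj G (Op G p I) (Op G p H)"
proof -
  obtain g where g: "g \<in> carrier G" "(g <# I) #> inv g \<subseteq> H" using IH unfolding subconj_def by blast
  have cI: "subgroup ((g <# I) #> inv g) G" by (rule conj_subgroup[OF I g(1)])
  have "(g <# Op G p I) #> inv g \<subseteq> Op G p ((g <# I) #> inv g)" by (rule Op_conj[OF fin I g(1)])
  also have "\<dots> \<subseteq> Op G p H" by (rule Op_mono[OF fin p H cI g(2)])
  finally show ?thesis unfolding subconj_def using g(1) by blast
qed

end


lemma (in group) level_one_elem:
  assumes fin: "finite (carrier G)" and p: "p > 0"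
  shows "\<exists>c. (\<forall>I\<in>subgroups_of G {\<one>}. int p dvd mark G {\<one>} I c) \<and> mark G {\<one>} {\<one>} c = int p"
proof -
  have W: "subgroup {\<one>} G" by (rule triv_subgroup)
  have Ws: "{\<one>} \<in> subgroups_of G {\<one>}" using W unfolding subgroups_of_def by auto
  have fs: "finite (subgroups_of G {\<one>})" by (rule finite_subgroups_of[OF fin])
  let ?c = "\<lambda>K. int p * (if K = {\<one>} then 1 else 0)"
  have m: "\<And>I. mark G {\<one>} I ?c = int p * int (fixed_cosets G {\<one>} {\<one>} I)"
    by (simp only: mark_smult mark_delta[OF fs Ws])
  have "mark G {\<one>} {\<one>} ?c = int p" using m fc_top[OF W] by simp
  moreover have "\<forall>I\<in>subgroups_of G {\<one>}. int p dvd mark G {\<one>} I ?c" using m by simp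
  ultimately show ?thesis by blast
qed

theorem theorem4p16:
  fixes G :: "('a, 'b) monoid_scheme" and H K :: "'a set" and p q :: nat
  assumes "group G" and "finite (carrier G)"
    and "subgroup H G" and "subgroup K G"
    and "Factorial_Ring.prime p" and "Factorial_Ring.prime q"
  shows "(tideal_le G K 0 H 0 \<longleftrightarrow> subconj G H K)
    \<and> (tideal_less G H 0 H p \<and> \<not> tideal_le G H p K 0)
    \<and> (tideal_le G K p H q \<longleftrightarrow> p = q \<and> subconj G (Op G p H) (Op G p K))
    \<and> (tideal_le G K 0 H p \<longleftrightarrow> subconj G (Op G p H) K)"
proof -
  interpret group G by (rule assms(1))
  note fin = assms(2) and Hs = assms(3) and Ks = assms(4) and p = assms(5) and q = assms(6)
  have Hc: "H \<subseteq> carrier G" using Hs by (rule subgroup.subset)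
  have Kc: "K \<subseteq> carrier G" using Ks by (rule subgroup.subset)
  have subc: "\<And>W I. subgroup W G \<Longrightarrow> I \<in> subgroups_of G W \<Longrightarrow> I \<subseteq> carrier G"
    unfolding subgroups_of_def using subgroup.subset by blast
  have self_in: "\<And>W. subgroup W G \<Longrightarrow> W \<in> subgroups_of G W" unfolding subgroups_of_def by auto
  have W1: "subgroup {\<one>\<^bsub>G\<^esub>} G" by (rule triv_subgroup)
  have one_in: "{\<one>\<^bsub>G\<^esub>} \<in> subgroups_of G {\<one>\<^bsub>G\<^esub>}" by (rule self_in[OF W1])
  have one_sc: "\<And>L. subgroup L G \<Longrightarrow> subconj G {\<one>\<^bsub>G\<^esub>} L"
    by (rule subconj_subset) (auto simp: subgroup.one_closed)
  have i: "tideal_le G K 0 H 0 \<longleftrightarrow> subconj G H K"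
  proof
    assume le: "tideal_le G K 0 H 0"
    show "subconj G H K"
    proof (rule ccontr)
      assume nK: "\<not> subconj G H K"
      obtain c where c: "\<forall>I\<in>subgroups_of G H. subconj G I K \<longrightarrow> mark G H I c = 0" "mark G H H c \<noteq> 0"
        using key0[OF fin Hs nK] by blast
      have "c \<in> pideal G K 0 H" using c(1) unfolding pideal_def by simp
      then have "c \<in> pideal G H 0 H" using le Hs unfolding tideal_le_def by blast
      moreover have "subconj G H H" by (rule subconj_subset[OF _ Hc]) simp
      ultimately have "mark G H H c = 0" using self_in[OF Hs] unfolding pideal_def by simp
      then show False using c(2) by simp
    qed
  next
    assume HK: "subconj G H K"
    show "tideal_le G K 0 H 0" unfolding tideal_le_def
    proof (intro allI impI subsetI)
      fix W c assume W: "subgroup W G" and c: "c \<in> pideal G K 0 W"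
      show "c \<in> pideal G H 0 W" unfolding pideal_def
      proof (intro CollectI ballI impI)
        fix I assume I: "I \<in> subgroups_of G W" and IH: "subconj G I H"
        have "subconj G I K" by (rule subconj_trans[OF IH HK subc[OF W I]])
        then show "int 0 dvd mark G W I c" using c I unfolding pideal_def by simp
      qed
    qed
  qed
  obtain c1 where c1: "\<forall>I\<in>subgroups_of G {\<one>\<^bsub>G\<^esub>}. int p dvd mark G {\<one>\<^bsub>G\<^esub>} I c1" "mark G {\<one>\<^bsub>G\<^esub>} {\<one>\<^bsub>G\<^esub>} c1 = int p"
    using level_one_elem[OF fin] p by (metis prime_gt_0_nat)
  have c1p: "\<And>L. c1 \<in> pideal G L p {\<one>\<^bsub>G\<^esub>}" using c1(1) unfolding pideal_def by simp
  have c1n: "\<And>L. subgroup L G \<Longrightarrow> c1 \<notin> pideal G L 0 {\<one>\<^bsub>G\<^esub>}"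
  proof
    fix L assume L: "subgroup L G" and c: "c1 \<in> pideal G L 0 {\<one>\<^bsub>G\<^esub>}"
    then have "int 0 dvd mark G {\<one>\<^bsub>G\<^esub>} {\<one>\<^bsub>G\<^esub>} c1" using one_in one_sc[OF L] unfolding pideal_def by blast
    then show False using c1(2) p by (simp add: prime_gt_0_nat)
  qed
  have ii: "tideal_less G H 0 H p \<and> \<not> tideal_le G H p K 0"
  proof
    have le: "tideal_le G H 0 H p" unfolding tideal_le_def pideal_def by auto
    have "pideal G H 0 {\<one>\<^bsub>G\<^esub>} \<noteq> pideal G H p {\<one>\<^bsub>G\<^esub>}" using c1p c1n[OF Hs] by blast
    then show "tideal_less G H 0 H p" using le W1 unfolding tideal_less_def by blast
    show "\<not> tideal_le G H p K 0" unfolding tideal_le_def using W1 c1p c1n[OF Ks] by blast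
  qed
  let ?P = "Op G p H"
  have P: "subgroup ?P G" "?P \<subseteq> H" using Op_subgroup[OF fin p Hs] by auto
  have Pc: "?P \<subseteq> carrier G" using P Hc by auto
  have Ppin: "?P \<in> subgroups_of G ?P" by (rule self_in[OF P(1)])
  have PH: "subconj G ?P H" by (rule subconj_subset[OF P(2) Pc])
  have cong: "\<And>W I L r c. subgroup W G \<Longrightarrow> I \<in> subgroups_of G W \<Longrightarrow> subconj G I H \<Longrightarrow>
      subconj G ?P L \<Longrightarrow> c \<in> pideal G L r W \<Longrightarrow> (r = 0 \<or> r = p) \<Longrightarrow> int p dvd mark G W I c"
  proof -
    fix W I L r c assume W: "subgroup W G" and I: "I \<in> subgroups_of G W" and IH: "subconj G I H"
      and PL: "subconj G ?P L" and c: "c \<in> pideal G L r W" and r: "r = 0 \<or> r = p"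
    have Is: "subgroup I G" "I \<subseteq> W" using I unfolding subgroups_of_def by auto
    have O: "subgroup (Op G p I) G" "Op G p I \<subseteq> I" using Op_subgroup[OF fin p Is(1)] by auto
    have Oin: "Op G p I \<in> subgroups_of G W" using O Is unfolding subgroups_of_def by auto
    have Oc: "Op G p I \<subseteq> carrier G" using O subgroup.subset by blast
    have "subconj G (Op G p I) ?P" by (rule Op_subconj[OF fin p Hs Is(1) IH])
    then have OL: "subconj G (Op G p I) L" by (rule subconj_trans[OF _ PL Oc])
    have "int r dvd mark G W (Op G p I) c" using c Oin OL unfolding pideal_def by blast
    then have d: "int p dvd mark G W (Op G p I) c" using r by auto
    have "int p dvd mark G W I c - mark G W (Op G p I) c" by (rule cong_Op[OF fin p W Is])
    then have "int p dvd (mark G W I c - mark G W (Op G p I) c) + mark G W (Op G p I) c" using d by (rule dvd_add)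
    then show "int p dvd mark G W I c" by simp
  qed
  have iii: "tideal_le G K p H q \<longleftrightarrow> p = q \<and> subconj G (Op G p H) (Op G p K)"
  proof
    assume le: "tideal_le G K p H q"
    have "c1 \<in> pideal G H q {\<one>\<^bsub>G\<^esub>}" using le W1 c1p unfolding tideal_le_def by blast
    then have "\<forall>I\<in>subgroups_of G {\<one>\<^bsub>G\<^esub>}. subconj G I H \<longrightarrow> int q dvd mark G {\<one>\<^bsub>G\<^esub>} I c1"
      unfolding pideal_def by simp
    then have "int q dvd mark G {\<one>\<^bsub>G\<^esub>} {\<one>\<^bsub>G\<^esub>} c1" using one_in one_sc[OF Hs] by simp
    then have "int q dvd int p" using c1(2) by simp
    then have "q dvd p" by (simp add: int_dvd_int_iff)
    then have pq: "p = q" using primes_dvd_imp_eq[OF q p] by simp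
    have "subconj G ?P (Op G p K)"
    proof (rule ccontr)
      assume nOK: "\<not> subconj G ?P (Op G p K)"
      have nK: "\<not> subconj G ?P K"
      proof
        assume "subconj G ?P K"
        then have "subconj G (Op G p ?P) (Op G p K)" by (rule Op_subconj[OF fin p Ks P(1)])
        moreover have "Op G p ?P = ?P" by (rule pperf_Op[OF fin p P(1) Op_perfect[OF fin p Hs]])
        ultimately show False using nOK by simp
      qed
      obtain c where c: "\<forall>I\<in>subgroups_of G ?P. subconj G I K \<longrightarrow> mark G ?P I c = 0"
          "\<not> int p dvd mark G ?P ?P c" using keyp[OF fin p Hs nK] by blast
      have "c \<in> pideal G K p ?P" using c(1) unfolding pideal_def by simp
      then have "c \<in> pideal G H q ?P" using le P(1) unfolding tideal_le_def by blast
      then have "int p dvd mark G ?P ?P c" using Ppin PH pq unfolding pideal_def by blast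
      then show False using c(2) by simp
    qed
    then show "p = q \<and> subconj G (Op G p H) (Op G p K)" using pq by simp
  next
    assume a: "p = q \<and> subconj G (Op G p H) (Op G p K)"
    have PK: "subconj G ?P K"
      by (rule subconj_mono_right[OF conjunct2[OF a] Op_subgroup(2)[OF fin p Ks]])
    have pq: "q = p" using a by simp
    show "tideal_le G K p H q" unfolding tideal_le_def
    proof (intro allI impI subsetI)
      fix W c assume W: "subgroup W G" and c: "c \<in> pideal G K p W"
      have "\<And>I. I \<in> subgroups_of G W \<Longrightarrow> subconj G I H \<Longrightarrow> int p dvd mark G W I c"
        using cong[OF W _ _ PK c] by simp
      then show "c \<in> pideal G H q W" unfolding pideal_def pq by simp
    qed
  qed
  have iv: "tideal_le G K 0 H p \<longleftrightarrow> subconj G (Op G p H) K"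
  proof
    assume le: "tideal_le G K 0 H p"
    show "subconj G ?P K"
    proof (rule ccontr)
      assume nK: "\<not> subconj G ?P K"
      obtain c where c: "\<forall>I\<in>subgroups_of G ?P. subconj G I K \<longrightarrow> mark G ?P I c = 0"
          "\<not> int p dvd mark G ?P ?P c" using keyp[OF fin p Hs nK] by blast
      have "c \<in> pideal G K 0 ?P" using c(1) unfolding pideal_def by simp
      then have "c \<in> pideal G H p ?P" using le P(1) unfolding tideal_le_def by blast
      then have "int p dvd mark G ?P ?P c" using Ppin PH unfolding pideal_def by blast
      then show False using c(2) by simp
    qed
  next
    assume PK: "subconj G (Op G p H) K"
    show "tideal_le G K 0 H p" unfolding tideal_le_def
    proof (intro allI impI subsetI)
      fix W c assume W: "subgroup W G" and c: "c \<in> pideal G K 0 W"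
      show "c \<in> pideal G H p W" unfolding pideal_def
        using cong[OF W _ _ PK c] by simp
    qed
  qed
  show ?thesis using i ii iii iv by blast
qed


end
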